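(* Let $\mathcal{H}_A\cong\mathbb{C}^d$ and $\mathcal{H}_B$ be finite-dimensional, let $\Phi_1,\Phi_2:\mathcal{L}(\mathcal{H}_A)\to\mathcal{L}(\mathcal{H}_B)$ be quantum channels, $\Delta_\Phi=\Phi_1-\Phi_2$, and let $r=\operatorname{rank}M(\Delta_\Phi)$. Then $$\|\Delta_\Phi\|_{\mathrm{ME}}\le \frac{r}{d}\,\|\Delta_\Phi\|_\diamond .$$
   Context: For a linear map $\mathcal{S}:\mathcal{L}(\mathcal{H}_A)\to\mathcal{L}(\mathcal{H}_B)$ with $\{\ket{i}\}$ an orthonormal basis of $\mathcal{H}_A$: the Choi operator is $J(\mathcal{S})=\sum_{i,j}\mathcal{S}(\ket{i}\!\bra{j})\otimes\ket{i}\!\bra{j}\in\mathcal{L}(\mathcal{H}_B\otimes\mathcal{H}_A)$; the M-operator is $M(\mathcal{S})=\mathrm{Tr}_B[\,|J(\mathcal{S})|\,]$ with $|X|=\sqrt{X^\dagger X}$; the ME-norm is $\|\mathcal{S}\|_{\mathrm{ME}}=\|J(\mathcal{S})/d\|_1$; the diamond norm is $\|\mathcal{S}\|_\diamond=\max_{\rho_{AA'}}\|(\mathcal{S}\otimes\mathrm{id}_{A'})(\rho_{AA'})\|_1$ over finite-dimensional ancillas $\mathcal{H}_{A'}$ and states $\rho_{AA'}$, with $\|X\|_1=\mathrm{Tr}\sqrt{X^\dagger X}$. *)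

theory Defs
  imports "Jordan_Normal_Form.Schur_Decomposition" "Jordan_Normal_Form.DL_Rank"
begin

text \<open>H_A = C^d, H_B = C^dB. A tensor product H_X (x) H_Y of dimensions m, n is C^(m*n),
  with basis vector |x>|y> at index x*n + y.\<close>

definition mtrace :: "complex mat \<Rightarrow> complex" where
  "mtrace A = (\<Sum>i<dim_row A. A $$ (i,i))"

definition psd :: "nat \<Rightarrow> complex mat \<Rightarrow> bool" where
  "psd n A \<longleftrightarrow> A \<in> carrier_mat n n \<and> mat_adjoint A = A \<and>
     (\<forall>v \<in> carrier_vec n. 0 \<le> Re (conjugate v \<bullet> (A *\<^sub>v v)))"

definition mat_abs :: "complex mat \<Rightarrow> complex mat" where
  "mat_abs X = (THE P. psd (dim_col X) P \<and> P * P = mat_adjoint X * X)"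

definition trace_norm :: "complex mat \<Rightarrow> real" where
  "trace_norm X = Re (mtrace (mat_abs X))"

definition lin_map :: "nat \<Rightarrow> nat \<Rightarrow> (complex mat \<Rightarrow> complex mat) \<Rightarrow> bool" where
  "lin_map d dB S \<longleftrightarrow>
     (\<forall>X \<in> carrier_mat d d. S X \<in> carrier_mat dB dB) \<and>
     (\<forall>X \<in> carrier_mat d d. \<forall>Y \<in> carrier_mat d d. S (X + Y) = S X + S Y) \<and>
     (\<forall>X \<in> carrier_mat d d. \<forall>c. S (c \<cdot>\<^sub>m X) = c \<cdot>\<^sub>m S X)"

text \<open>(S (x) id_k) acting on L(C^d (x) C^k), result in L(C^dB (x) C^k).\<close>
definition tensor_id :: "nat \<Rightarrow> nat \<Rightarrow> nat \<Rightarrow> (complex mat \<Rightarrow> complex mat) \<Rightarrow> complex mat \<Rightarrow> complex mat" where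
  "tensor_id d dB k S X = mat (dB * k) (dB * k) (\<lambda>(r, s).
     S (mat d d (\<lambda>(a, b). X $$ (a * k + r mod k, b * k + s mod k))) $$ (r div k, s div k))"

definition quantum_channel :: "nat \<Rightarrow> nat \<Rightarrow> (complex mat \<Rightarrow> complex mat) \<Rightarrow> bool" where
  "quantum_channel d dB S \<longleftrightarrow> lin_map d dB S \<and>
     (\<forall>k. \<forall>X. psd (d * k) X \<longrightarrow> psd (dB * k) (tensor_id d dB k S X)) \<and>
     (\<forall>X \<in> carrier_mat d d. mtrace (S X) = mtrace X)"

text \<open>Choi operator J(S) = sum_{i,j} S(|i><j|) (x) |i><j| in L(H_B (x) H_A).\<close>
definition choi :: "nat \<Rightarrow> nat \<Rightarrow> (complex mat \<Rightarrow> complex mat) \<Rightarrow> complex mat" where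
  "choi d dB S = mat (dB * d) (dB * d) (\<lambda>(r, s).
     S (mat d d (\<lambda>(a, b). if a = r mod d \<and> b = s mod d then 1 else 0)) $$ (r div d, s div d))"

text \<open>Partial trace over the first factor H_B of an operator on H_B (x) H_A.\<close>
definition ptrace_B :: "nat \<Rightarrow> nat \<Rightarrow> complex mat \<Rightarrow> complex mat" where
  "ptrace_B d dB Y = mat d d (\<lambda>(i, j). \<Sum>b<dB. Y $$ (b * d + i, b * d + j))"

definition M_op :: "nat \<Rightarrow> nat \<Rightarrow> (complex mat \<Rightarrow> complex mat) \<Rightarrow> complex mat" where
  "M_op d dB S = ptrace_B d dB (mat_abs (choi d dB S))"

definition me_norm :: "nat \<Rightarrow> nat \<Rightarrow> (complex mat \<Rightarrow> complex mat) \<Rightarrow> real" where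
  "me_norm d dB S = trace_norm ((1 / of_nat d) \<cdot>\<^sub>m choi d dB S)"

definition density :: "nat \<Rightarrow> complex mat \<Rightarrow> bool" where
  "density n \<rho> \<longleftrightarrow> psd n \<rho> \<and> mtrace \<rho> = 1"

text \<open>Diamond norm: supremum over all finite ancilla dimensions k and states rho on C^d (x) C^k
  (the supremum is attained, i.e. it is the max of the paper).\<close>
definition diamond_norm :: "nat \<Rightarrow> nat \<Rightarrow> (complex mat \<Rightarrow> complex mat) \<Rightarrow> real" where
  "diamond_norm d dB S = Sup {trace_norm (tensor_id d dB k S \<rho>) | k \<rho>. density (d * k) \<rho>}"

definition mat_rank :: "complex mat \<Rightarrow> nat" where
  "mat_rank A = vec_space.rank (dim_row A) A"

end

theory Submission
  imports Defs "Jordan_Normal_Form.Spectral_Radius"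
begin
lemma adj_dims[simp]: "dim_row (mat_adjoint A) = dim_col A" "dim_col (mat_adjoint A) = dim_row A"
  unfolding mat_adjoint_def by (auto simp: mat_of_rows_def)

lemma adj_index[simp]: "i < dim_col A \<Longrightarrow> j < dim_row A \<Longrightarrow> mat_adjoint A $$ (i,j) = cnj (A $$ (j,i))"
  unfolding mat_adjoint_def by (auto simp: mat_of_rows_def)

lemma adj_carrier[simp]: "A \<in> carrier_mat n m \<Longrightarrow> mat_adjoint A \<in> carrier_mat m n"
  unfolding carrier_mat_def by simp

lemma mult_index_sum: "A \<in> carrier_mat n m \<Longrightarrow> B \<in> carrier_mat m k \<Longrightarrow> i < n \<Longrightarrow> j < k \<Longrightarrow>
   (A * B) $$ (i,j) = (\<Sum>l<m. A $$ (i,l) * B $$ (l,j))"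
  by (auto simp: scalar_prod_def lessThan_atLeast0 intro!: sum.cong)

lemma adj_adj[simp]: "mat_adjoint (mat_adjoint (A::complex mat)) = A"
  by (rule eq_matI) auto

lemma adj_mult: "(A::complex mat) \<in> carrier_mat n m \<Longrightarrow> B \<in> carrier_mat m k \<Longrightarrow>
   mat_adjoint (A * B) = mat_adjoint B * mat_adjoint A"
  apply (rule eq_matI)
  apply (auto simp del: index_mult_mat(1) simp: mult_index_sum[of _ k m _ n] mult_index_sum[of _ n m _ k] cnj_sum mult.commute)
  done

lemma adj_one[simp]: "mat_adjoint (1\<^sub>m n :: complex mat) = 1\<^sub>m n"
  by (rule eq_matI) auto

lemma adj_zero[simp]: "mat_adjoint (0\<^sub>m n m :: complex mat) = 0\<^sub>m m n"
  by (rule eq_matI) auto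

lemma adj_minus: "(A::complex mat) \<in> carrier_mat n m \<Longrightarrow> B \<in> carrier_mat n m \<Longrightarrow>
   mat_adjoint (A - B) = mat_adjoint A - mat_adjoint B"
  by (rule eq_matI) auto

lemma adj_plus: "(A::complex mat) \<in> carrier_mat n m \<Longrightarrow> B \<in> carrier_mat n m \<Longrightarrow>
   mat_adjoint (A + B) = mat_adjoint A + mat_adjoint B"
  by (rule eq_matI) auto

lemma adj_smult: "mat_adjoint (c \<cdot>\<^sub>m (A::complex mat)) = cnj c \<cdot>\<^sub>m mat_adjoint A"
  by (rule eq_matI) auto

definition unitary_m :: "nat \<Rightarrow> complex mat \<Rightarrow> bool" where
  "unitary_m n U \<longleftrightarrow> U \<in> carrier_mat n n \<and> mat_adjoint U * U = 1\<^sub>m n \<and> U * mat_adjoint U = 1\<^sub>m n"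

definition dmat :: "nat \<Rightarrow> (nat \<Rightarrow> real) \<Rightarrow> complex mat" where
  "dmat n f = mat n n (\<lambda>(i,j). if i = j then complex_of_real (f i) else 0)"

lemma dmat_carrier[simp]: "dmat n f \<in> carrier_mat n n" and dmat_dims[simp]: "dim_row (dmat n f) = n" "dim_col (dmat n f) = n"
  by (auto simp: dmat_def)

lemma dmat_index[simp]: "i < n \<Longrightarrow> j < n \<Longrightarrow> dmat n f $$ (i,j) = (if i = j then complex_of_real (f i) else 0)"
  by (auto simp: dmat_def)

lemma adj_dmat[simp]: "mat_adjoint (dmat n f) = dmat n f"
  by (rule eq_matI) auto

lemma dmat_mult: "dmat n f * dmat n g = dmat n (\<lambda>i. f i * g i)"
  apply (rule eq_matI)
  apply (auto simp del: index_mult_mat(1) simp: mult_index_sum[of _ n n _ n] if_distrib cong: if_cong)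
  done

lemma cscal_sum: "v \<in> carrier_vec n \<Longrightarrow> w \<in> carrier_vec n \<Longrightarrow>
   v \<bullet>c w = (\<Sum>l<n. v $ l * cnj (w $ l))"
  by (simp add: scalar_prod_def lessThan_atLeast0)

lemma cscal_self: "v \<in> carrier_vec n \<Longrightarrow> v \<bullet>c v = complex_of_real (\<Sum>l<n. (cmod (v $ l))\<^sup>2)"
  unfolding cscal_sum[of v n v] of_real_sum by (intro sum.cong refl) (metis complex_norm_square of_real_power)

lemma cscal_self_pos: assumes "v \<in> carrier_vec n" "v \<noteq> 0\<^sub>v n"
  shows "(\<Sum>l<n. (cmod (v $ l))\<^sup>2) > 0"
proof -
  from assms obtain l where l: "l < n" "v $ l \<noteq> 0"
    by (metis carrier_vecD eq_vecI index_zero_vec(1) index_zero_vec(2))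
  have "(cmod (v $ l))\<^sup>2 > 0" using l by simp
  moreover have "(cmod (v $ l))\<^sup>2 \<le> (\<Sum>l<n. (cmod (v $ l))\<^sup>2)"
    by (rule member_le_sum) (use l in auto)
  ultimately show ?thesis by linarith
qed

definition nrmz :: "complex vec \<Rightarrow> complex vec" where
  "nrmz w = complex_of_real (1 / sqrt (\<Sum>l<dim_vec w. (cmod (w $ l))\<^sup>2)) \<cdot>\<^sub>v w"

lemma nrmz_carrier[simp]: "w \<in> carrier_vec n \<Longrightarrow> nrmz w \<in> carrier_vec n"
  by (simp add: nrmz_def)

lemma cscal_smult: "v \<in> carrier_vec n \<Longrightarrow> w \<in> carrier_vec n \<Longrightarrow>
   (a \<cdot>\<^sub>v v) \<bullet>c (b \<cdot>\<^sub>v w) = a * cnj b * (v \<bullet>c w)"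
  by (simp add: cscal_sum[of _ n] sum_distrib_left mult_ac)

lemma nrmz_self: assumes "w \<in> carrier_vec n" "w \<noteq> 0\<^sub>v n" shows "nrmz w \<bullet>c nrmz w = 1"
proof -
  let ?s = "\<Sum>l<n. (cmod (w $ l))\<^sup>2"
  have s: "?s > 0" using cscal_self_pos[OF assms] .
  have dw: "dim_vec w = n" using assms by auto
  have "nrmz w \<bullet>c nrmz w = complex_of_real (1 / sqrt ?s) * cnj (complex_of_real (1 / sqrt ?s)) * (w \<bullet>c w)"
    unfolding nrmz_def dw by (rule cscal_smult[OF assms(1) assms(1)])
  also have "\<dots> = complex_of_real ((1 / sqrt ?s) * (1 / sqrt ?s) * ?s)"
    by (simp only: cscal_self[OF assms(1)] complex_cnj_complex_of_real of_real_mult)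
  also have "(1 / sqrt ?s) * (1 / sqrt ?s) * ?s = 1" using s
    by (simp add: field_simps)
  finally show ?thesis by simp
qed

lemma nrmz_orth: assumes "v \<in> carrier_vec n" "w \<in> carrier_vec n" "v \<bullet>c w = 0" shows "nrmz v \<bullet>c nrmz w = 0"
  using assms unfolding nrmz_def by (subst cscal_smult[of _ n]) auto

lemma nrmz_unit: assumes "w \<in> carrier_vec n" "w \<bullet>c w = 1" shows "nrmz w = w"
proof -
  have "complex_of_real (\<Sum>l<n. (cmod (w $ l))\<^sup>2) = 1" using cscal_self[OF assms(1)] assms(2) by simp
  hence "(\<Sum>l<n. (cmod (w $ l))\<^sup>2) = 1" by (metis of_real_eq_1_iff)
  thus ?thesis using assms(1) unfolding nrmz_def by auto
qed

lemma nrmz_nz: assumes "w \<in> carrier_vec n" "w \<noteq> 0\<^sub>v n" shows "nrmz w \<noteq> 0\<^sub>v n"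
  using nrmz_self[OF assms] assms by auto

lemma unitary_adj: "unitary_m n U \<Longrightarrow> unitary_m n (mat_adjoint U)"
  unfolding unitary_m_def by auto

lemma unitary_mult: assumes "unitary_m n U" "unitary_m n V" shows "unitary_m n (U * V)"
proof -
  have c: "U \<in> carrier_mat n n" "V \<in> carrier_mat n n" "mat_adjoint U \<in> carrier_mat n n" "mat_adjoint V \<in> carrier_mat n n"
    using assms unfolding unitary_m_def by auto
  have u: "mat_adjoint U * U = 1\<^sub>m n" "U * mat_adjoint U = 1\<^sub>m n"
     "mat_adjoint V * V = 1\<^sub>m n" "V * mat_adjoint V = 1\<^sub>m n" using assms unfolding unitary_m_def by auto
  have a1: "mat_adjoint U * (U * V) = V"
    using assoc_mult_mat[OF c(3) c(1) c(2)] u(1) c(2) by simp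
  have a2: "V * (mat_adjoint V * mat_adjoint U) = mat_adjoint U"
    using assoc_mult_mat[OF c(2) c(4) c(3)] u(4) left_mult_one_mat[OF c(3)] by simp
  have "mat_adjoint (U * V) * (U * V) = mat_adjoint V * (mat_adjoint U * (U * V))"
    using c by (simp add: adj_mult[of _ n n _ n] assoc_mult_mat[OF c(4) c(3) mult_carrier_mat[OF c(1) c(2)]])
  also have "\<dots> = 1\<^sub>m n" using a1 u by simp
  finally have 1: "mat_adjoint (U * V) * (U * V) = 1\<^sub>m n" .
  have "(U * V) * mat_adjoint (U * V) = U * (V * (mat_adjoint V * mat_adjoint U))"
    using c by (simp add: adj_mult[of _ n n _ n] assoc_mult_mat[OF c(1) c(2) mult_carrier_mat[OF c(4) c(3)]])
  also have "\<dots> = 1\<^sub>m n" using a2 u by simp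
  finally show ?thesis using 1 c unfolding unitary_m_def by simp
qed

lemma unitary_of_cols: assumes us: "set us \<subseteq> carrier_vec n" "length us = n"
  and orth: "\<And>i j. i < n \<Longrightarrow> j < n \<Longrightarrow> us ! j \<bullet>c us ! i = (if i = j then 1 else 0)"
  shows "unitary_m n (mat_of_cols n us)"
proof -
  let ?W = "mat_of_cols n us"
  have W: "?W \<in> carrier_mat n n" using us by (metis mat_of_cols_carrier(1))
  have "mat_adjoint ?W * ?W = 1\<^sub>m n"
  proof (rule eq_matI)
    fix i j assume ij: "i < dim_row (1\<^sub>m n :: complex mat)" "j < dim_col (1\<^sub>m n :: complex mat)"
    hence ij': "i < n" "j < n" by auto
    have ui: "us ! i \<in> carrier_vec n" "us ! j \<in> carrier_vec n" using us ij' by auto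
    have "(mat_adjoint ?W * ?W) $$ (i,j) = (\<Sum>l<n. mat_adjoint ?W $$ (i,l) * ?W $$ (l,j))"
      by (rule mult_index_sum[OF adj_carrier[OF W] W ij'])
    also have "\<dots> = (\<Sum>l<n. us ! j $ l * cnj (us ! i $ l))"
      using ij' us W by (intro sum.cong) (auto simp: mat_of_cols_def)
    also have "\<dots> = us ! j \<bullet>c us ! i" using cscal_sum[OF ui(2) ui(1)] by simp
    finally show "(mat_adjoint ?W * ?W) $$ (i,j) = 1\<^sub>m n $$ (i,j)" using orth[OF ij'] ij' by simp
  qed (use W in auto)
  moreover hence "?W * mat_adjoint ?W = 1\<^sub>m n"
    using mat_mult_left_right_inverse[OF adj_carrier[OF W] W] by simp
  ultimately show ?thesis using W unfolding unitary_m_def by simp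
qed

lemma mult_sq_carrier[simp]: "A \<in> carrier_mat n n \<Longrightarrow> B \<in> carrier_mat n n \<Longrightarrow> A * B \<in> carrier_mat n n"
  by auto

lemma exists_unitary_first_col:
  assumes v: "v \<in> carrier_vec n" "v \<bullet>c v = 1"
  shows "\<exists>W. unitary_m n W \<and> col W 0 = v"
proof -
  have v0: "v \<noteq> 0\<^sub>v n" using v by auto
  interpret cof_vec_space n "TYPE(complex)" .
  define b where "b = basis_completion v"
  from basis_completion[OF v(1) v0, folded b_def]
  have b: "set b \<subseteq> carrier_vec n" and dist_b: "distinct b" and indep: "\<not> lin_dep (set b)"
    and hdb: "hd b = v" and len_b: "length b = n" by auto
  have n: "n > 0" using v0 v(1) by (cases n) (auto intro!: eq_vecI)
  from hdb len_b n obtain vs where bv: "b = v # vs" by (cases b, auto)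
  define ws where "ws = gram_schmidt n b"
  from gram_schmidt_result[OF b dist_b indep ws_def]
  have ws: "corthogonal ws" "set ws \<subseteq> carrier_vec n" "length ws = n" using len_b by auto
  have hdws: "hd ws = v" unfolding ws_def bv using gram_schmidt_hd[OF v(1)] by simp
  define us where "us = map nrmz ws"
  have us: "set us \<subseteq> carrier_vec n" "length us = n" using ws unfolding us_def by auto
  have wsi: "i < n \<Longrightarrow> ws ! i \<in> carrier_vec n" for i using ws by auto
  have wsnz: "i < n \<Longrightarrow> ws ! i \<noteq> 0\<^sub>v n" for i
  proof
    assume i: "i < n" and z: "ws ! i = 0\<^sub>v n"
    have "ws ! i \<bullet>c ws ! i \<noteq> 0" using corthogonalD[OF ws(1), of i i] i ws(3) by simp
    thus False using z by simp
  qed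
  have orth: "us ! j \<bullet>c us ! i = (if i = j then 1 else 0)" if ij: "i < n" "j < n" for i j
  proof (cases "i = j")
    case True thus ?thesis using nrmz_self[OF wsi wsnz] ij ws(3) unfolding us_def by simp
  next
    case False
    have "ws ! j \<bullet>c ws ! i = 0" using corthogonalD[OF ws(1), of j i] ij ws(3) False by simp
    thus ?thesis using nrmz_orth[OF wsi[OF ij(2)] wsi[OF ij(1)]] ij ws(3) False unfolding us_def by simp
  qed
  define W where "W = mat_of_cols n us"
  have U: "unitary_m n W" unfolding W_def by (rule unitary_of_cols[OF us orth])
  have "ws ! 0 = v" using hdws ws(3) n by (metis hd_conv_nth length_0_conv not_less0)
  hence "us ! 0 = v" unfolding us_def using nrmz_unit[OF v] ws(3) n by simp
  moreover have "col W 0 = us ! 0" unfolding W_def by (rule col_mat_of_cols) (use us n in auto)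
  ultimately have "col W 0 = v" by simp
  thus ?thesis using U by blast
qed

lemma spectral:
  fixes A :: "complex mat"
  assumes "A \<in> carrier_mat n n" "mat_adjoint A = A"
  shows "\<exists>U f. unitary_m n U \<and> A = U * dmat n f * mat_adjoint U"
  using assms
proof (induction n arbitrary: A)
  case 0
  have "A = 1\<^sub>m 0 * dmat 0 (\<lambda>_. 0) * mat_adjoint (1\<^sub>m 0)" by (rule eq_matI) (use 0 in auto)
  moreover have "unitary_m 0 (1\<^sub>m 0)" by (simp add: unitary_m_def)
  ultimately show ?case by blast
next
  case (Suc m)
  let ?n = "Suc m"
  have A: "A \<in> carrier_mat ?n ?n" and h: "mat_adjoint A = A" using Suc.prems by auto
  from spectrum_non_empty[OF A] obtain e where "eigenvalue A e" unfolding spectrum_def by auto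
  then obtain v0 where "eigenvector A v0 e" unfolding eigenvalue_def by auto
  hence v0: "v0 \<in> carrier_vec ?n" "v0 \<noteq> 0\<^sub>v ?n" "A *\<^sub>v v0 = e \<cdot>\<^sub>v v0"
    unfolding eigenvector_def using A by auto
  define c where "c = complex_of_real (1 / sqrt (\<Sum>l<?n. (cmod (v0 $ l))\<^sup>2))"
  define v where "v = nrmz v0"
  have v_eq: "v = c \<cdot>\<^sub>v v0" unfolding v_def nrmz_def c_def using v0 by auto
  have v: "v \<in> carrier_vec ?n" "v \<bullet>c v = 1" unfolding v_def using v0 nrmz_self by auto
  have Av: "A *\<^sub>v v = e \<cdot>\<^sub>v v" unfolding v_eq
    using mult_mat_vec[OF A v0(1)] v0(3) by (simp add: smult_smult_assoc mult.commute)
  obtain W where W: "unitary_m ?n W" "col W 0 = v" using exists_unitary_first_col[OF v] by blast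
  have Wc: "W \<in> carrier_mat ?n ?n" and Wa: "mat_adjoint W \<in> carrier_mat ?n ?n"
    and WW: "mat_adjoint W * W = 1\<^sub>m ?n" "W * mat_adjoint W = 1\<^sub>m ?n" using W unfolding unitary_m_def by auto
  define A' where "A' = mat_adjoint W * (A * W)"
  have A'c: "A' \<in> carrier_mat ?n ?n" unfolding A'_def using Wc Wa A by simp
  have hA': "mat_adjoint A' = A'" unfolding A'_def
    using A Wc Wa h by (simp add: adj_mult[of _ ?n ?n _ ?n] assoc_mult_mat[of _ ?n ?n _ ?n _ ?n])
  have col0: "A' $$ (i, 0) = (if i = 0 then e else 0)" if i: "i < ?n" for i
  proof -
    have "A' $$ (i,0) = row (mat_adjoint W) i \<bullet> col (A * W) 0" unfolding A'_def using i A Wc by simp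
    also have "col (A * W) 0 = e \<cdot>\<^sub>v v" using col_mult2[OF A Wc, of 0] W(2) Av by simp
    also have "row (mat_adjoint W) i \<bullet> (e \<cdot>\<^sub>v v) = e * (row (mat_adjoint W) i \<bullet> col W 0)"
    proof -
      have r: "row (mat_adjoint W) i \<in> carrier_vec ?n" using Wc by (intro carrier_vecI) simp
      show ?thesis using scalar_prod_smult_distrib[OF r v(1)] W(2) by simp
    qed
    also have "row (mat_adjoint W) i \<bullet> col W 0 = (mat_adjoint W * W) $$ (i,0)" using i Wa Wc by simp
    also have "\<dots> = (if i = 0 then 1 else 0)" using WW i by simp
    finally show ?thesis by simp
  qed
  have herm_idx: "A' $$ (i,j) = cnj (A' $$ (j,i))" if "i < ?n" "j < ?n" for i j
  proof -
    have "A' $$ (i,j) = mat_adjoint A' $$ (i,j)" using hA' by simp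
    thus ?thesis using that A'c by simp
  qed
  have "cnj e = e" using herm_idx[of 0 0] col0[of 0] by simp
  hence "e \<in> \<real>" using Reals_cnj_iff by blast
  hence "Im e = 0" using complex_is_Real_iff by blast
  hence e_real: "e = complex_of_real (Re e)" by (simp add: complex_eq_iff)
  have row0: "A' $$ (0, j) = (if j = 0 then e else 0)" if j: "j < ?n" for j
    using herm_idx[of 0 j] col0[OF j] j \<open>cnj e = e\<close> by auto
  define A3 where "A3 = mat m m (\<lambda>(i,j). A' $$ (Suc i, Suc j))"
  have A3c: "A3 \<in> carrier_mat m m" unfolding A3_def by auto
  have hA3: "mat_adjoint A3 = A3"
    by (rule eq_matI) (auto simp: A3_def herm_idx[symmetric])
  from Suc.IH[OF A3c hA3] obtain U3 f3 where U3: "unitary_m m U3" "A3 = U3 * dmat m f3 * mat_adjoint U3"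
    by blast
  have U3c: "U3 \<in> carrier_mat m m" and U3a: "mat_adjoint U3 \<in> carrier_mat m m"
    and UU3: "mat_adjoint U3 * U3 = 1\<^sub>m m" "U3 * mat_adjoint U3 = 1\<^sub>m m" using U3 unfolding unitary_m_def by auto
  define U' where "U' = four_block_mat (1\<^sub>m 1) (0\<^sub>m 1 m) (0\<^sub>m m 1) U3"
  define f where "f = (\<lambda>i. if i = 0 then Re e else f3 (i - 1))"
  have A'blk: "A' = four_block_mat (dmat 1 (\<lambda>_. Re e)) (0\<^sub>m 1 m) (0\<^sub>m m 1) A3"
  proof (rule eq_matI)
    fix i j assume ij: "i < dim_row (four_block_mat (dmat 1 (\<lambda>_. Re e)) (0\<^sub>m 1 m) (0\<^sub>m m 1) A3)"
      "j < dim_col (four_block_mat (dmat 1 (\<lambda>_. Re e)) (0\<^sub>m 1 m) (0\<^sub>m m 1) A3)"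
    hence ij': "i < ?n" "j < ?n" using A3c by auto
    show "A' $$ (i, j) = four_block_mat (dmat 1 (\<lambda>_. Re e)) (0\<^sub>m 1 m) (0\<^sub>m m 1) A3 $$ (i, j)"
    proof (cases "i = 0 \<or> j = 0")
      case True thus ?thesis using col0 row0 ij' A3c e_real by auto
    next
      case False
      then obtain i' j' where "i = Suc i'" "j = Suc j'" by (metis not0_implies_Suc)
      thus ?thesis using ij' A3c by (auto simp: A3_def)
    qed
  qed (use A'c A3c in auto)
  have Dblk: "dmat ?n f = four_block_mat (dmat 1 (\<lambda>_. Re e)) (0\<^sub>m 1 m) (0\<^sub>m m 1) (dmat m f3)"
    by (rule eq_matI) (auto simp: f_def)
  have U'a: "mat_adjoint U' = four_block_mat (1\<^sub>m 1) (0\<^sub>m 1 m) (0\<^sub>m m 1) (mat_adjoint U3)"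
    unfolding U'_def by (rule eq_matI) (use U3c in auto)
  have U'c: "U' \<in> carrier_mat ?n ?n" unfolding U'_def using U3c by auto
  have U'U: "mat_adjoint U' * U' = 1\<^sub>m ?n"
    unfolding U'a unfolding U'_def
    by (subst mult_four_block_mat[of _ 1 1 _ m _ m _ _ 1 _ m]) (use U3c UU3 in auto)
  hence U'u: "unitary_m ?n U'"
    using mat_mult_left_right_inverse[OF adj_carrier[OF U'c] U'c] U'c unfolding unitary_m_def by auto
  have "U' * dmat ?n f * mat_adjoint U' = U' * (dmat ?n f * mat_adjoint U')"
    using assoc_mult_mat[OF U'c dmat_carrier adj_carrier[OF U'c]] .
  also have "\<dots> = A'"
  proof -
    have inner: "dmat ?n f * mat_adjoint U' = four_block_mat (dmat 1 (\<lambda>_. Re e)) (0\<^sub>m 1 m) (0\<^sub>m m 1) (dmat m f3 * mat_adjoint U3)"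
      unfolding U'a Dblk
      by (subst mult_four_block_mat[of _ 1 1 _ m _ m _ _ 1 _ m]) (use U3c U3a in auto)
    show ?thesis unfolding inner A'blk U3(2) unfolding U'_def
      by (subst mult_four_block_mat[of _ 1 1 _ m _ m _ _ 1 _ m])
        (use U3c U3a in \<open>auto simp: assoc_mult_mat[of _ m m _ m _ m]\<close>)
  qed
  finally have A'eq: "U' * dmat ?n f * mat_adjoint U' = A'" .
  have "A = W * A' * mat_adjoint W"
  proof -
    have "W * A' * mat_adjoint W = (W * mat_adjoint W) * A * (W * mat_adjoint W)"
      unfolding A'_def using Wc Wa A by (simp add: assoc_mult_mat[of _ ?n ?n _ ?n _ ?n])
    thus ?thesis using WW A by simp
  qed
  also have "\<dots> = (W * U') * dmat ?n f * mat_adjoint (W * U')"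
    unfolding A'eq[symmetric] using Wc Wa U'c
    by (simp add: adj_mult[of _ ?n ?n _ ?n] assoc_mult_mat[of _ ?n ?n _ ?n _ ?n])
  finally show ?case using unitary_mult[OF W(1) U'u] by blast
qed

lemma unit_rows: assumes "unitary_m n U" "i < n" "j < n"
  shows "(\<Sum>k<n. U $$ (i,k) * cnj (U $$ (j,k))) = (if i = j then 1 else 0)"
proof -
  have U: "U \<in> carrier_mat n n" "U * mat_adjoint U = 1\<^sub>m n" using assms unfolding unitary_m_def by auto
  have "(U * mat_adjoint U) $$ (i,j) = (\<Sum>k<n. U $$ (i,k) * mat_adjoint U $$ (k,j))"
    by (rule mult_index_sum[OF U(1) adj_carrier[OF U(1)] assms(2,3)])
  also have "\<dots> = (\<Sum>k<n. U $$ (i,k) * cnj (U $$ (j,k)))" using U(1) assms by (intro sum.cong) auto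
  finally show ?thesis using U(2) assms by simp
qed

lemma unit_cols: assumes "unitary_m n U" "i < n" "j < n"
  shows "(\<Sum>k<n. cnj (U $$ (k,i)) * U $$ (k,j)) = (if i = j then 1 else 0)"
proof -
  have U: "U \<in> carrier_mat n n" "mat_adjoint U * U = 1\<^sub>m n" using assms unfolding unitary_m_def by auto
  have "(mat_adjoint U * U) $$ (i,j) = (\<Sum>k<n. mat_adjoint U $$ (i,k) * U $$ (k,j))"
    by (rule mult_index_sum[OF adj_carrier[OF U(1)] U(1) assms(2,3)])
  also have "\<dots> = (\<Sum>k<n. cnj (U $$ (k,i)) * U $$ (k,j))" using U(1) assms by (intro sum.cong) auto
  finally show ?thesis using U(2) assms by simp
qed

lemma udu_index: assumes "U \<in> carrier_mat n n" "i < n" "j < n"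
  shows "(U * dmat n f * mat_adjoint U) $$ (i,j) = (\<Sum>k<n. U $$ (i,k) * complex_of_real (f k) * cnj (U $$ (j,k)))"
proof -
  have UD: "U * dmat n f \<in> carrier_mat n n" using assms by simp
  have "(U * dmat n f * mat_adjoint U) $$ (i,j) = (\<Sum>k<n. (U * dmat n f) $$ (i,k) * mat_adjoint U $$ (k,j))"
    by (rule mult_index_sum[OF UD adj_carrier[OF assms(1)] assms(2,3)])
  also have "\<dots> = (\<Sum>k<n. U $$ (i,k) * complex_of_real (f k) * cnj (U $$ (j,k)))"
  proof (rule sum.cong[OF refl])
    fix k assume k: "k \<in> {..<n}"
    have "(U * dmat n f) $$ (i,k) = (\<Sum>l<n. U $$ (i,l) * dmat n f $$ (l,k))"
      by (rule mult_index_sum[OF assms(1) dmat_carrier assms(2)]) (use k in auto)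
    also have "\<dots> = (\<Sum>l<n. if l = k then U $$ (i,k) * complex_of_real (f k) else 0)"
      using k by (intro sum.cong) auto
    also have "\<dots> = U $$ (i,k) * complex_of_real (f k)" using k by simp
    finally show "(U * dmat n f) $$ (i,k) * mat_adjoint U $$ (k,j) = U $$ (i,k) * complex_of_real (f k) * cnj (U $$ (j,k))"
      using k assms by simp
  qed
  finally show ?thesis .
qed

lemma mult_vec_sum: "A \<in> carrier_mat n m \<Longrightarrow> v \<in> carrier_vec m \<Longrightarrow> i < n \<Longrightarrow>
   (A *\<^sub>v v) $ i = (\<Sum>j<m. A $$ (i,j) * v $ j)"
  by (auto simp: scalar_prod_def lessThan_atLeast0 intro!: sum.cong)

lemma qf_sum: "A \<in> carrier_mat n n \<Longrightarrow> v \<in> carrier_vec n \<Longrightarrow>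
   conjugate v \<bullet> (A *\<^sub>v v) = (\<Sum>i<n. cnj (v $ i) * (\<Sum>j<n. A $$ (i,j) * v $ j))"
  by (auto simp: scalar_prod_def lessThan_atLeast0 mult_vec_sum[of _ n n] intro!: sum.cong)

definition wco :: "complex mat \<Rightarrow> nat \<Rightarrow> complex vec \<Rightarrow> nat \<Rightarrow> complex" where
  "wco U n v k = (\<Sum>j<n. cnj (U $$ (j,k)) * v $ j)"

lemma vec_udu: assumes "U \<in> carrier_mat n n" "v \<in> carrier_vec n" "i < n"
  shows "((U * dmat n g * mat_adjoint U) *\<^sub>v v) $ i = (\<Sum>k<n. U $$ (i,k) * complex_of_real (g k) * wco U n v k)"
proof -
  have "((U * dmat n g * mat_adjoint U) *\<^sub>v v) $ i = (\<Sum>j<n. (\<Sum>k<n. U $$ (i,k) * complex_of_real (g k) * cnj (U $$ (j,k))) * v $ j)"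
  proof -
    have c: "U * dmat n g * mat_adjoint U \<in> carrier_mat n n" using assms by simp
    show ?thesis unfolding mult_vec_sum[OF c assms(2,3)]
    proof (rule sum.cong[OF refl])
      fix j assume "j \<in> {..<n}"
      hence j: "j < n" by simp
      show "(U * dmat n g * mat_adjoint U) $$ (i, j) * v $ j = (\<Sum>k<n. U $$ (i,k) * complex_of_real (g k) * cnj (U $$ (j,k))) * v $ j"
        by (simp only: udu_index[OF assms(1) assms(3) j])
    qed
  qed
  also have "\<dots> = (\<Sum>j<n. \<Sum>k<n. U $$ (i,k) * complex_of_real (g k) * (cnj (U $$ (j,k)) * v $ j))"
    by (intro sum.cong refl) (simp add: sum_distrib_right sum_distrib_left mult_ac)
  also have "\<dots> = (\<Sum>k<n. \<Sum>j<n. U $$ (i,k) * complex_of_real (g k) * (cnj (U $$ (j,k)) * v $ j))"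
    by (rule sum.swap)
  also have "\<dots> = (\<Sum>k<n. U $$ (i,k) * complex_of_real (g k) * wco U n v k)"
    by (simp add: wco_def sum_distrib_left)
  finally show ?thesis .
qed

lemma qf_udu: assumes "U \<in> carrier_mat n n" "v \<in> carrier_vec n"
  shows "conjugate v \<bullet> ((U * dmat n f * mat_adjoint U) *\<^sub>v v) = complex_of_real (\<Sum>k<n. f k * (cmod (wco U n v k))\<^sup>2)"
proof -
  have "conjugate v \<bullet> ((U * dmat n f * mat_adjoint U) *\<^sub>v v) = (\<Sum>i<n. cnj (v $ i) * ((U * dmat n f * mat_adjoint U) *\<^sub>v v) $ i)"
    using assms by (auto simp: scalar_prod_def lessThan_atLeast0 intro!: sum.cong)
  also have "\<dots> = (\<Sum>i<n. cnj (v $ i) * (\<Sum>k<n. U $$ (i,k) * complex_of_real (f k) * wco U n v k))"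
  proof (rule sum.cong[OF refl])
    fix i assume "i \<in> {..<n}"
    hence i: "i < n" by simp
    show "cnj (v $ i) * ((U * dmat n f * mat_adjoint U) *\<^sub>v v) $ i = cnj (v $ i) * (\<Sum>k<n. U $$ (i,k) * complex_of_real (f k) * wco U n v k)"
      by (simp only: vec_udu[OF assms i])
  qed
  also have "\<dots> = (\<Sum>i<n. \<Sum>k<n. complex_of_real (f k) * wco U n v k * (cnj (v $ i) * U $$ (i,k)))"
    by (intro sum.cong refl) (auto simp: sum_distrib_left intro!: sum.cong)
  also have "\<dots> = (\<Sum>k<n. \<Sum>i<n. complex_of_real (f k) * wco U n v k * (cnj (v $ i) * U $$ (i,k)))"
    by (rule sum.swap)
  also have "\<dots> = (\<Sum>k<n. complex_of_real (f k) * wco U n v k * cnj (wco U n v k))"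
  proof (rule sum.cong[OF refl])
    fix k
    have cw: "cnj (wco U n v k) = (\<Sum>i<n. cnj (v $ i) * U $$ (i,k))" by (simp add: wco_def cnj_sum mult.commute)
    show "(\<Sum>i<n. complex_of_real (f k) * wco U n v k * (cnj (v $ i) * U $$ (i,k))) = complex_of_real (f k) * wco U n v k * cnj (wco U n v k)"
      by (simp add: cw sum_distrib_left)
  qed
  also have "\<dots> = complex_of_real (\<Sum>k<n. f k * (cmod (wco U n v k))\<^sup>2)"
    unfolding of_real_sum by (intro sum.cong refl) (metis complex_norm_square mult.assoc of_real_mult)
  finally show ?thesis .
qed

lemma kernel_udu: assumes U: "U \<in> carrier_mat n n" and v: "v \<in> carrier_vec n"
  and f: "\<And>k. k < n \<Longrightarrow> f k \<ge> 0"
  and z: "Re (conjugate v \<bullet> ((U * dmat n f * mat_adjoint U) *\<^sub>v v)) = 0"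
  and g: "\<And>k. k < n \<Longrightarrow> f k = 0 \<Longrightarrow> g k = 0"
  shows "(U * dmat n g * mat_adjoint U) *\<^sub>v v = 0\<^sub>v n"
proof -
  have s: "(\<Sum>k<n. f k * (cmod (wco U n v k))\<^sup>2) = 0" using z qf_udu[OF U v, of f] by simp
  have "\<forall>k\<in>{..<n}. f k * (cmod (wco U n v k))\<^sup>2 = 0"
    by (rule sum_nonneg_eq_0_iff[THEN iffD1, OF _ _ s]) (auto intro!: mult_nonneg_nonneg f)
  hence gk: "k < n \<Longrightarrow> complex_of_real (g k) * wco U n v k = 0" for k using g by fastforce
  show ?thesis
  proof (rule eq_vecI)
    fix i assume "i < dim_vec (0\<^sub>v n :: complex vec)"
    hence i: "i < n" by simp
    show "((U * dmat n g * mat_adjoint U) *\<^sub>v v) $ i = 0\<^sub>v n $ i"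
      using i gk by (simp add: vec_udu[OF U v i] mult.assoc) (auto intro!: sum.neutral)
  qed (use U in simp)
qed

lemma adj_udu: "U \<in> carrier_mat n n \<Longrightarrow> mat_adjoint (U * dmat n f * mat_adjoint U) = U * dmat n f * mat_adjoint U"
  by (simp add: adj_mult[of _ n n _ n] assoc_mult_mat[of _ n n _ n _ n])

lemma psd_udu: assumes "unitary_m n U" "\<And>k. k < n \<Longrightarrow> f k \<ge> 0"
  shows "psd n (U * dmat n f * mat_adjoint U)"
proof -
  have U: "U \<in> carrier_mat n n" using assms unfolding unitary_m_def by auto
  show ?thesis unfolding psd_def
  proof (intro conjI ballI)
    show "U * dmat n f * mat_adjoint U \<in> carrier_mat n n" using U by simp
    show "mat_adjoint (U * dmat n f * mat_adjoint U) = U * dmat n f * mat_adjoint U" using adj_udu[OF U] .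
    fix v :: "complex vec" assume v: "v \<in> carrier_vec n"
    show "0 \<le> Re (conjugate v \<bullet> ((U * dmat n f * mat_adjoint U) *\<^sub>v v))"
      unfolding qf_udu[OF U v, of f] Re_complex_of_real by (auto intro!: sum_nonneg mult_nonneg_nonneg assms(2))
  qed
qed

lemma wco_col: assumes "unitary_m n U" "k < n" "l < n"
  shows "wco U n (col U k) l = (if l = k then 1 else 0)"
proof -
  have U: "U \<in> carrier_mat n n" using assms unfolding unitary_m_def by auto
  have "wco U n (col U k) l = (\<Sum>j<n. cnj (U $$ (j,l)) * U $$ (j,k))"
    unfolding wco_def using U assms by (intro sum.cong) auto
  thus ?thesis using unit_cols[OF assms(1) assms(3) assms(2)] by auto
qed

lemma psd_udu_nonneg: assumes "unitary_m n U" "psd n (U * dmat n f * mat_adjoint U)" "k < n"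
  shows "f k \<ge> 0"
proof -
  have U: "U \<in> carrier_mat n n" using assms unfolding unitary_m_def by auto
  have c: "col U k \<in> carrier_vec n" using U by (intro carrier_vecI) simp
  have "0 \<le> Re (conjugate (col U k) \<bullet> ((U * dmat n f * mat_adjoint U) *\<^sub>v col U k))"
    using assms(2) c unfolding psd_def by blast
  also have "\<dots> = (\<Sum>l<n. f l * (cmod (wco U n (col U k) l))\<^sup>2)" unfolding qf_udu[OF U c] Re_complex_of_real ..
  also have "\<dots> = (\<Sum>l<n. if l = k then f k else 0)"
    by (intro sum.cong refl) (simp add: wco_col[OF assms(1) assms(3)])
  also have "\<dots> = f k" using assms(3) by simp
  finally show ?thesis .
qed

lemma psd_spectral: assumes "psd n P"
  shows "\<exists>U f. unitary_m n U \<and> (\<forall>k<n. f k \<ge> 0) \<and> P = U * dmat n f * mat_adjoint U"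
proof -
  have P: "P \<in> carrier_mat n n" "mat_adjoint P = P" using assms unfolding psd_def by auto
  obtain U f where Uf: "unitary_m n U" "P = U * dmat n f * mat_adjoint U" using spectral[OF P] by blast
  thus ?thesis using psd_udu_nonneg[OF Uf(1)] assms by metis
qed

lemma psd_kernel: assumes "psd n P" "v \<in> carrier_vec n" "Re (conjugate v \<bullet> (P *\<^sub>v v)) = 0"
  shows "P *\<^sub>v v = 0\<^sub>v n"
proof -
  obtain U f where Uf: "unitary_m n U" "\<forall>k<n. f k \<ge> 0" "P = U * dmat n f * mat_adjoint U"
    using psd_spectral[OF assms(1)] by blast
  have U: "U \<in> carrier_mat n n" using Uf unfolding unitary_m_def by auto
  show ?thesis using kernel_udu[OF U assms(2), of f f] Uf assms(3) by auto
qed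

lemma adj_move: fixes A :: "complex mat" assumes "A \<in> carrier_mat n n" "v \<in> carrier_vec n" "y \<in> carrier_vec n"
  shows "conjugate v \<bullet> (A *\<^sub>v y) = conjugate (mat_adjoint A *\<^sub>v v) \<bullet> y"
proof -
  have "conjugate v \<bullet> (A *\<^sub>v y) = (\<Sum>i<n. cnj (v $ i) * (\<Sum>j<n. A $$ (i,j) * y $ j))"
    using assms by (auto simp: scalar_prod_def lessThan_atLeast0 mult_vec_sum[of _ n n] intro!: sum.cong)
  also have "\<dots> = (\<Sum>i<n. \<Sum>j<n. cnj (v $ i) * A $$ (i,j) * y $ j)"
    by (simp add: sum_distrib_left mult.assoc)
  also have "\<dots> = (\<Sum>j<n. \<Sum>i<n. cnj (v $ i) * A $$ (i,j) * y $ j)" by (rule sum.swap)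
  also have "\<dots> = (\<Sum>j<n. cnj (\<Sum>i<n. cnj (A $$ (i,j)) * v $ i) * y $ j)"
    by (intro sum.cong refl) (simp add: sum_distrib_left sum_distrib_right cnj_sum mult_ac)
  also have "\<dots> = conjugate (mat_adjoint A *\<^sub>v v) \<bullet> y"
    using assms by (auto simp: scalar_prod_def lessThan_atLeast0 mult_vec_sum[of _ n n] intro!: sum.cong)
  finally show ?thesis .
qed

lemma sqrt_unique: assumes P: "psd n P" and Q: "psd n Q" and PQ: "P * P = Q * Q"
  shows "P = Q"
proof -
  have Pc: "P \<in> carrier_mat n n" and hP: "mat_adjoint P = P" using P unfolding psd_def by auto
  have Qc: "Q \<in> carrier_mat n n" and hQ: "mat_adjoint Q = Q" using Q unfolding psd_def by auto
  define R where "R = P - Q"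
  have Rc: "R \<in> carrier_mat n n" unfolding R_def using Pc Qc by (simp add: minus_carrier_mat)
  have hR: "mat_adjoint R = R" unfolding R_def using adj_minus[OF Pc Qc] hP hQ by simp
  obtain V h where Vh: "unitary_m n V" "R = V * dmat n h * mat_adjoint V" using spectral[OF Rc hR] by blast
  have Vc: "V \<in> carrier_mat n n" using Vh unfolding unitary_m_def by auto
  have hz: "h k = 0" if k: "k < n" for k
  proof (rule ccontr)
    assume hk: "h k \<noteq> 0"
    define v where "v = col V k"
    have vc: "v \<in> carrier_vec n" unfolding v_def using Vc by (intro carrier_vecI) simp
    have Rv: "R *\<^sub>v v = complex_of_real (h k) \<cdot>\<^sub>v v"
    proof (rule eq_vecI)
      fix i assume "i < dim_vec (complex_of_real (h k) \<cdot>\<^sub>v v)"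
      hence i: "i < n" using vc by simp
      have "(R *\<^sub>v v) $ i = (\<Sum>l<n. V $$ (i,l) * complex_of_real (h l) * wco V n v l)"
        unfolding Vh(2) by (rule vec_udu[OF Vc vc i])
      also have "\<dots> = (\<Sum>l<n. if l = k then V $$ (i,k) * complex_of_real (h k) else 0)"
        unfolding v_def by (intro sum.cong refl) (simp add: wco_col[OF Vh(1) k])
      also have "\<dots> = (complex_of_real (h k) \<cdot>\<^sub>v v) $ i" using k i vc Vc by (simp add: v_def)
      finally show "(R *\<^sub>v v) $ i = (complex_of_real (h k) \<cdot>\<^sub>v v) $ i" .
    qed (use Rc vc in simp)
    have vnz: "v \<noteq> 0\<^sub>v n"
    proof
      assume "v = 0\<^sub>v n"
      hence "wco V n v k = 0" unfolding wco_def by simp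
      thus False using wco_col[OF Vh(1) k k] unfolding v_def by simp
    qed
    have Pv: "P *\<^sub>v v \<in> carrier_vec n" "Q *\<^sub>v v \<in> carrier_vec n" using Pc Qc vc by auto
    have z: "P *\<^sub>v (R *\<^sub>v v) + R *\<^sub>v (Q *\<^sub>v v) = 0\<^sub>v n"
    proof -
      have e1: "R *\<^sub>v v = P *\<^sub>v v - Q *\<^sub>v v" unfolding R_def by (rule minus_mult_distrib_mat_vec[OF Pc Qc vc])
      have e2: "R *\<^sub>v (Q *\<^sub>v v) = P *\<^sub>v (Q *\<^sub>v v) - Q *\<^sub>v (Q *\<^sub>v v)" unfolding R_def by (rule minus_mult_distrib_mat_vec[OF Pc Qc Pv(2)])
      have e3: "P *\<^sub>v (P *\<^sub>v v) = Q *\<^sub>v (Q *\<^sub>v v)"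
        using assoc_mult_mat_vec[OF Pc Pc vc] assoc_mult_mat_vec[OF Qc Qc vc] PQ by simp
      show ?thesis unfolding e1 e2 mult_minus_distrib_mat_vec[OF Pc Pv]
        by (rule eq_vecI) (use Pc Qc Pv e3 in \<open>auto dest: arg_cong[where f = "\<lambda>w. w $ _"]\<close>)
    qed
    define qP where "qP = conjugate v \<bullet> (P *\<^sub>v v)"
    define qQ where "qQ = conjugate v \<bullet> (Q *\<^sub>v v)"
    have cv: "conjugate v \<in> carrier_vec n" using vc by simp
    have "0 = conjugate v \<bullet> (P *\<^sub>v (R *\<^sub>v v) + R *\<^sub>v (Q *\<^sub>v v))" using z cv by simp
    also have "\<dots> = conjugate v \<bullet> (P *\<^sub>v (R *\<^sub>v v)) + conjugate v \<bullet> (R *\<^sub>v (Q *\<^sub>v v))"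
      by (rule scalar_prod_add_distrib[OF cv]) (use Pc Rc Pv vc in auto)
    also have "conjugate v \<bullet> (P *\<^sub>v (R *\<^sub>v v)) = complex_of_real (h k) * qP"
      unfolding Rv qP_def mult_mat_vec[OF Pc vc] using cv Pv by simp
    also have "conjugate v \<bullet> (R *\<^sub>v (Q *\<^sub>v v)) = complex_of_real (h k) * qQ"
    proof -
      have cs: "conjugate (complex_of_real (h k) \<cdot>\<^sub>v v) = complex_of_real (h k) \<cdot>\<^sub>v conjugate v"
        by (simp add: conjugate_smult_vec)
      show ?thesis unfolding adj_move[OF Rc vc Pv(2)] hR Rv qQ_def cs
        by (rule smult_scalar_prod_distrib[OF cv Pv(2)])
    qed
    finally have "complex_of_real (h k) * (qP + qQ) = 0" by (simp add: algebra_simps)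
    hence s: "qP + qQ = 0" using hk by simp
    have "Re qP \<ge> 0" "Re qQ \<ge> 0" using P Q vc unfolding psd_def qP_def qQ_def by auto
    moreover have "Re qP + Re qQ = 0" using arg_cong[OF s, of Re] by simp
    ultimately have "Re qP = 0" "Re qQ = 0" by linarith+
    hence "P *\<^sub>v v = 0\<^sub>v n" "Q *\<^sub>v v = 0\<^sub>v n" using psd_kernel[OF P vc] psd_kernel[OF Q vc] unfolding qP_def qQ_def by auto
    hence "R *\<^sub>v v = 0\<^sub>v n" unfolding R_def minus_mult_distrib_mat_vec[OF Pc Qc vc] by simp
    hence "complex_of_real (h k) \<cdot>\<^sub>v v = 0\<^sub>v n" using Rv by simp
    moreover obtain i where "i < n" "v $ i \<noteq> 0" using vnz vc by (metis carrier_vecD eq_vecI index_zero_vec(1) index_zero_vec(2))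
    ultimately show False using hk vc by (metis index_smult_vec(1) index_zero_vec(1) mult_eq_0_iff of_real_eq_0_iff carrier_vecD)
  qed
  show ?thesis
  proof (rule eq_matI)
    fix i j assume "i < dim_row Q" "j < dim_col Q"
    hence ij: "i < n" "j < n" using Qc by auto
    have "R $$ (i,j) = (\<Sum>k<n. V $$ (i,k) * complex_of_real (h k) * cnj (V $$ (j,k)))"
      unfolding Vh(2) by (rule udu_index[OF Vc ij])
    also have "\<dots> = 0" using hz by simp
    finally show "P $$ (i,j) = Q $$ (i,j)" unfolding R_def using ij Pc Qc by simp
  qed (use Pc Qc in auto)
qed

lemma udu_mult: assumes "unitary_m n U"
  shows "(U * dmat n f * mat_adjoint U) * (U * dmat n g * mat_adjoint U) = U * dmat n (\<lambda>k. f k * g k) * mat_adjoint U"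
proof -
  have U: "U \<in> carrier_mat n n" "mat_adjoint U * U = 1\<^sub>m n" using assms unfolding unitary_m_def by auto
  have Ua: "mat_adjoint U \<in> carrier_mat n n" using U by simp
  have X: "mat_adjoint U * (U * X) = X" if "X \<in> carrier_mat n n" for X
    using assoc_mult_mat[OF Ua U(1) that] U(2) that by simp
  have "(U * dmat n f * mat_adjoint U) * (U * dmat n g * mat_adjoint U) = U * (dmat n f * (mat_adjoint U * (U * (dmat n g * mat_adjoint U))))"
    using U Ua by (simp add: assoc_mult_mat[of _ n n _ n _ n])
  also have "\<dots> = U * (dmat n f * (dmat n g * mat_adjoint U))" using X[of "dmat n g * mat_adjoint U"] Ua by simp
  also have "\<dots> = U * (dmat n f * dmat n g) * mat_adjoint U"
    using U Ua by (simp add: assoc_mult_mat[of _ n n _ n _ n])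
  finally show ?thesis by (simp add: dmat_mult)
qed

lemma mat_abs_udu: assumes U: "unitary_m n U" and J: "J = U * dmat n d * mat_adjoint U"
  shows "mat_abs J = U * dmat n (\<lambda>k. \<bar>d k\<bar>) * mat_adjoint U"
proof -
  have Uc: "U \<in> carrier_mat n n" using U unfolding unitary_m_def by auto
  have dc: "dim_col J = n" using J Uc by simp
  let ?A = "U * dmat n (\<lambda>k. \<bar>d k\<bar>) * mat_adjoint U"
  have psdA: "psd n ?A" by (rule psd_udu[OF U]) simp
  have AA: "?A * ?A = mat_adjoint J * J"
    unfolding J adj_udu[OF Uc] udu_mult[OF U] by (simp add: abs_mult_self_eq)
  show ?thesis unfolding mat_abs_def dc
  proof (rule the_equality)
    show "psd n ?A \<and> ?A * ?A = mat_adjoint J * J" using psdA AA by simp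
    fix P assume "psd n P \<and> P * P = mat_adjoint J * J"
    thus "P = ?A" using sqrt_unique[OF _ psdA] AA by auto
  qed
qed

lemma mtrace_udu: assumes U: "unitary_m n U"
  shows "mtrace (U * dmat n f * mat_adjoint U) = complex_of_real (\<Sum>k<n. f k)"
proof -
  have Uc: "U \<in> carrier_mat n n" using U unfolding unitary_m_def by auto
  have "mtrace (U * dmat n f * mat_adjoint U) = (\<Sum>i<n. \<Sum>k<n. U $$ (i,k) * complex_of_real (f k) * cnj (U $$ (i,k)))"
    unfolding mtrace_def using Uc by (intro sum.cong) (auto simp: udu_index simp del: index_mult_mat(1))
  also have "\<dots> = (\<Sum>k<n. \<Sum>i<n. complex_of_real (f k) * (cnj (U $$ (i,k)) * U $$ (i,k)))"
    by (subst sum.swap) (simp add: mult_ac)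
  also have "\<dots> = (\<Sum>k<n. complex_of_real (f k))"
    by (intro sum.cong refl) (simp add: sum_distrib_left[symmetric] unit_cols[OF U])
  finally show ?thesis by simp
qed

lemma trace_norm_udu: assumes U: "unitary_m n U"
  shows "trace_norm (U * dmat n d * mat_adjoint U) = (\<Sum>k<n. \<bar>d k\<bar>)"
  unfolding trace_norm_def mat_abs_udu[OF U refl] mtrace_udu[OF U] by simp

lemma smult_udu: assumes "U \<in> carrier_mat n n"
  shows "complex_of_real c \<cdot>\<^sub>m (U * dmat n f * mat_adjoint U) = U * dmat n (\<lambda>k. c * f k) * mat_adjoint U"
proof (rule eq_matI)
  fix i j assume "i < dim_row (U * dmat n (\<lambda>k. c * f k) * mat_adjoint U)" "j < dim_col (U * dmat n (\<lambda>k. c * f k) * mat_adjoint U)"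
  hence ij: "i < n" "j < n" using assms by auto
  show "(complex_of_real c \<cdot>\<^sub>m (U * dmat n f * mat_adjoint U)) $$ (i, j) = (U * dmat n (\<lambda>k. c * f k) * mat_adjoint U) $$ (i, j)"
    using ij assms by (simp add: udu_index sum_distrib_left mult_ac del: index_mult_mat(1))
qed (use assms in auto)

lemma sum_qf_cols: assumes V: "unitary_m n V" and A: "A \<in> carrier_mat n n"
  shows "(\<Sum>k<n. conjugate (col V k) \<bullet> (A *\<^sub>v col V k)) = mtrace A"
proof -
  have Vc: "V \<in> carrier_mat n n" using V unfolding unitary_m_def by auto
  have cc: "k < n \<Longrightarrow> col V k \<in> carrier_vec n" for k using Vc by (intro carrier_vecI) simp
  have "(\<Sum>k<n. conjugate (col V k) \<bullet> (A *\<^sub>v col V k)) = (\<Sum>k<n. \<Sum>i<n. cnj (V $$ (i,k)) * (\<Sum>j<n. A $$ (i,j) * V $$ (j,k)))"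
    using Vc by (intro sum.cong refl) (simp add: qf_sum[OF A cc])
  also have "\<dots> = (\<Sum>k<n. \<Sum>i<n. \<Sum>j<n. A $$ (i,j) * (V $$ (j,k) * cnj (V $$ (i,k))))"
    by (intro sum.cong refl) (simp add: sum_distrib_left mult_ac)
  also have "\<dots> = (\<Sum>i<n. \<Sum>j<n. \<Sum>k<n. A $$ (i,j) * (V $$ (j,k) * cnj (V $$ (i,k))))"
    by (subst sum.swap) (rule sum.cong[OF refl], rule sum.swap)
  also have "\<dots> = (\<Sum>i<n. \<Sum>j<n. A $$ (i,j) * (if j = i then 1 else 0))"
    by (intro sum.cong refl) (simp add: sum_distrib_left[symmetric] unit_rows[OF V])
  also have "\<dots> = (\<Sum>i<n. A $$ (i,i))" by (simp add: if_distrib cong: if_cong)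
  also have "\<dots> = mtrace A" unfolding mtrace_def using A by simp
  finally show ?thesis .
qed

lemma qf_minus: fixes A :: "complex mat" assumes "A \<in> carrier_mat n n" "B \<in> carrier_mat n n" "v \<in> carrier_vec n"
  shows "conjugate v \<bullet> ((A - B) *\<^sub>v v) = conjugate v \<bullet> (A *\<^sub>v v) - conjugate v \<bullet> (B *\<^sub>v v)"
proof -
  have "A - B \<in> carrier_mat n n" using assms by (simp add: minus_carrier_mat)
  hence "conjugate v \<bullet> ((A - B) *\<^sub>v v) = (\<Sum>i<n. cnj (v $ i) * (\<Sum>j<n. (A - B) $$ (i,j) * v $ j))"
    using qf_sum assms(3) by blast
  also have "\<dots> = (\<Sum>i<n. cnj (v $ i) * (\<Sum>j<n. A $$ (i,j) * v $ j)) - (\<Sum>i<n. cnj (v $ i) * (\<Sum>j<n. B $$ (i,j) * v $ j))"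
    unfolding sum_subtractf[symmetric] using assms
    by (intro sum.cong refl) (auto simp: sum_subtractf right_diff_distrib[symmetric] left_diff_distrib intro!: sum.cong)
  also have "\<dots> = conjugate v \<bullet> (A *\<^sub>v v) - conjugate v \<bullet> (B *\<^sub>v v)"
    by (simp only: qf_sum[OF assms(1,3)] qf_sum[OF assms(2,3)])
  finally show ?thesis .
qed

lemma trace_norm_diff_le: assumes Y1: "psd n Y1" and Y2: "psd n Y2"
  and t1: "mtrace Y1 = 1" and t2: "mtrace Y2 = 1"
  shows "trace_norm (Y1 - Y2) \<le> 2"
proof -
  have c1: "Y1 \<in> carrier_mat n n" "mat_adjoint Y1 = Y1" using Y1 unfolding psd_def by auto
  have c2: "Y2 \<in> carrier_mat n n" "mat_adjoint Y2 = Y2" using Y2 unfolding psd_def by auto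
  have Yc: "Y1 - Y2 \<in> carrier_mat n n" using c2 by (simp add: minus_carrier_mat)
  have hY: "mat_adjoint (Y1 - Y2) = Y1 - Y2" using adj_minus[OF c1(1) c2(1)] c1 c2 by simp
  obtain V h where Vh: "unitary_m n V" "Y1 - Y2 = V * dmat n h * mat_adjoint V" using spectral[OF Yc hY] by blast
  have Vc: "V \<in> carrier_mat n n" using Vh unfolding unitary_m_def by auto
  have cc: "k < n \<Longrightarrow> col V k \<in> carrier_vec n" for k using Vc by (intro carrier_vecI) simp
  define q1 where "q1 k = Re (conjugate (col V k) \<bullet> (Y1 *\<^sub>v col V k))" for k
  define q2 where "q2 k = Re (conjugate (col V k) \<bullet> (Y2 *\<^sub>v col V k))" for k
  have hk: "h k = q1 k - q2 k" if k: "k < n" for k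
  proof -
    have "conjugate (col V k) \<bullet> ((Y1 - Y2) *\<^sub>v col V k) = complex_of_real (\<Sum>l<n. h l * (cmod (wco V n (col V k) l))\<^sup>2)"
      unfolding Vh(2) by (rule qf_udu[OF Vc cc[OF k]])
    also have "(\<Sum>l<n. h l * (cmod (wco V n (col V k) l))\<^sup>2) = (\<Sum>l<n. if l = k then h k else 0)"
      by (intro sum.cong refl) (simp add: wco_col[OF Vh(1) k])
    also have "\<dots> = h k" using k by simp
    finally show ?thesis unfolding q1_def q2_def using qf_minus[OF c1(1) c2(1) cc[OF k]]
      by (metis Re_complex_of_real minus_complex.simps(1))
  qed
  have q1: "k < n \<Longrightarrow> q1 k \<ge> 0" and q2: "k < n \<Longrightarrow> q2 k \<ge> 0" for k
    using Y1 Y2 cc unfolding psd_def q1_def q2_def by auto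
  have s1: "(\<Sum>k<n. q1 k) = 1" unfolding q1_def using arg_cong[OF sum_qf_cols[OF Vh(1) c1(1)], of Re] t1
    by (simp add: Re_sum)
  have s2: "(\<Sum>k<n. q2 k) = 1" unfolding q2_def using arg_cong[OF sum_qf_cols[OF Vh(1) c2(1)], of Re] t2
    by (simp add: Re_sum)
  have "trace_norm (Y1 - Y2) = (\<Sum>k<n. \<bar>h k\<bar>)" unfolding Vh(2) by (rule trace_norm_udu[OF Vh(1)])
  also have "\<dots> \<le> (\<Sum>k<n. q1 k + q2 k)"
    by (rule sum_mono) (use hk q1 q2 in fastforce)
  also have "\<dots> = 2" using s1 s2 by (simp add: sum.distrib)
  finally show ?thesis .
qed

lemma trace_norm_herm_nonneg: assumes "A \<in> carrier_mat n n" "mat_adjoint A = A"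
  shows "trace_norm A \<ge> 0"
proof -
  obtain V h where Vh: "unitary_m n V" "A = V * dmat n h * mat_adjoint V" using spectral[OF assms] by blast
  show ?thesis unfolding Vh(2) trace_norm_udu[OF Vh(1)] by (simp add: sum_nonneg)
qed

lemma sum_split: fixes f :: "nat \<Rightarrow> 'a::comm_monoid_add" shows "(\<Sum>r<m*k. f r) = (\<Sum>b<m. \<Sum>c<k. f (b*k+c))"
proof -
  have "(\<Sum>r<m*k. f r) = (\<Sum>b<m. sum f {b*k..<b*k+k})" using sum.nat_group[where g=f and k=k and n=m] by simp
  also have "\<dots> = (\<Sum>b<m. \<Sum>c<k. f (b*k+c))"
  proof (rule sum.cong[OF refl])
    fix b
    have "{b*k..<b*k+k} = (\<lambda>c. b*k+c) ` {..<k}"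
    proof (auto simp: image_def)
      fix x assume "b * k \<le> x" "x < b * k + k"
      thus "\<exists>xa\<in>{..<k}. x = b * k + xa" by (intro bexI[of _ "x - b*k"]) auto
    qed
    thus "sum f {b*k..<b*k+k} = (\<Sum>c<k. f (b*k+c))" by (simp add: sum.reindex)
  qed
  finally show ?thesis .
qed

definition Emat :: "nat \<Rightarrow> nat \<Rightarrow> nat \<Rightarrow> complex mat" where
  "Emat d a b = mat d d (\<lambda>(x,y). if x = a \<and> y = b then 1 else 0)"

lemma Emat_carrier[simp]: "Emat d a b \<in> carrier_mat d d" by (simp add: Emat_def)

lemma lin_expand: assumes S: "lin_map d dB S" and X: "X \<in> carrier_mat d d" and ij: "i < dB" "j < dB"
  shows "S X $$ (i,j) = (\<Sum>a<d. \<Sum>b<d. X $$ (a,b) * S (Emat d a b) $$ (i,j))"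
proof -
  have Sc: "\<And>Y. Y \<in> carrier_mat d d \<Longrightarrow> S Y \<in> carrier_mat dB dB"
   and Sa: "\<And>Y Z. Y \<in> carrier_mat d d \<Longrightarrow> Z \<in> carrier_mat d d \<Longrightarrow> S (Y + Z) = S Y + S Z"
   and Ss: "\<And>Y c. Y \<in> carrier_mat d d \<Longrightarrow> S (c \<cdot>\<^sub>m Y) = c \<cdot>\<^sub>m S Y" using S unfolding lin_map_def by auto
  define XK where "XK K = mat d d (\<lambda>(a,b). if (a,b) \<in> K then X $$ (a,b) else 0)" for K
  have XKc: "XK K \<in> carrier_mat d d" for K unfolding XK_def by simp
  have main: "K \<subseteq> {..<d} \<times> {..<d} \<longrightarrow> S (XK K) $$ (i,j) = (\<Sum>p\<in>K. X $$ p * S (Emat d (fst p) (snd p)) $$ (i,j))"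
    if "finite K" for K
    using that
  proof (induction K rule: finite_induct)
    case empty
    have "XK {} = 0 \<cdot>\<^sub>m X" unfolding XK_def by (rule eq_matI) (use X in auto)
    hence "S (XK {}) = 0 \<cdot>\<^sub>m S X" using Ss[OF X] by simp
    thus ?case using Sc[OF X] ij by simp
  next
    case (insert p K)
    show ?case
    proof
      assume sub: "insert p K \<subseteq> {..<d} \<times> {..<d}"
      obtain a b where p: "p = (a,b)" by (cases p)
      have ab: "a < d" "b < d" using sub p by auto
      have "XK (insert p K) = XK K + X $$ (a,b) \<cdot>\<^sub>m Emat d a b"
        unfolding XK_def Emat_def by (rule eq_matI) (use insert(2) p in auto)
      hence "S (XK (insert p K)) = S (XK K) + X $$ (a,b) \<cdot>\<^sub>m S (Emat d a b)"
        using Sa[OF XKc smult_carrier_mat[OF Emat_carrier]] Ss[OF Emat_carrier] by simp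
      hence "S (XK (insert p K)) $$ (i,j) = S (XK K) $$ (i,j) + X $$ (a,b) * S (Emat d a b) $$ (i,j)"
        using Sc[OF Emat_carrier, of a b] Sc[OF XKc, of K] ij by simp
      thus "S (XK (insert p K)) $$ (i,j) = (\<Sum>p\<in>insert p K. X $$ p * S (Emat d (fst p) (snd p)) $$ (i,j))"
        using insert sub p by simp
    qed
  qed
  have "XK ({..<d} \<times> {..<d}) = X" unfolding XK_def by (rule eq_matI) (use X in auto)
  hence "S X $$ (i,j) = (\<Sum>p\<in>{..<d} \<times> {..<d}. X $$ p * S (Emat d (fst p) (snd p)) $$ (i,j))"
    using main[of "{..<d} \<times> {..<d}"] by simp
  also have "\<dots> = (\<Sum>a<d. \<Sum>b<d. X $$ (a,b) * S (Emat d a b) $$ (i,j))"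
    by (simp add: sum.cartesian_product split_def)
  finally show ?thesis .
qed

lemma idx_lt: assumes "a < m" "(x::nat) < d" shows "a*d + x < m*d"
proof -
  have "a*d + x < a*d + d" using assms by simp
  also have "\<dots> = Suc a * d" by simp
  also have "\<dots> \<le> m * d" using assms(1) by (intro mult_le_mono1) simp
  finally show ?thesis .
qed

lemma div_lt: "(r::nat) < m * d \<Longrightarrow> r div d < m"
  by (simp add: less_mult_imp_div_less)

lemma mod_lt: "(r::nat) < m * d \<Longrightarrow> r mod d < d"
  by (metis mod_less_divisor mult_0_right nat_neq_iff not_less_zero gr_implies_not0)

lemma choi_diff: assumes "lin_map d dB P1" "lin_map d dB P2"
  shows "choi d dB (\<lambda>X. P1 X - P2 X) = choi d dB P1 - choi d dB P2"
proof -
  have c: "\<And>Y. Y \<in> carrier_mat d d \<Longrightarrow> P1 Y \<in> carrier_mat dB dB \<and> P2 Y \<in> carrier_mat dB dB"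
    using assms unfolding lin_map_def by auto
  have c': "\<And>Y. Y \<in> carrier_mat d d \<Longrightarrow> dim_row (P2 Y) = dB \<and> dim_col (P2 Y) = dB" using c by auto
  show ?thesis
    by (rule eq_matI) (auto simp: choi_def c' div_lt)
qed

lemma tensor_diff: assumes "lin_map d dB P1" "lin_map d dB P2"
  shows "tensor_id d dB k (\<lambda>X. P1 X - P2 X) Y = tensor_id d dB k P1 Y - tensor_id d dB k P2 Y"
proof -
  have c: "\<And>Y. Y \<in> carrier_mat d d \<Longrightarrow> P1 Y \<in> carrier_mat dB dB \<and> P2 Y \<in> carrier_mat dB dB"
    using assms unfolding lin_map_def by auto
  have c': "\<And>Y. Y \<in> carrier_mat d d \<Longrightarrow> dim_row (P2 Y) = dB \<and> dim_col (P2 Y) = dB" using c by auto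
  show ?thesis
    by (rule eq_matI) (auto simp: tensor_id_def c' div_lt)
qed

definition rank1 :: "nat \<Rightarrow> (nat \<Rightarrow> complex) \<Rightarrow> complex mat" where
  "rank1 N a = mat N N (\<lambda>(r,s). a r * cnj (a s))"

lemma psd_rank1: "psd N (rank1 N a)"
proof -
  have c: "rank1 N a \<in> carrier_mat N N" by (simp add: rank1_def)
  have h: "mat_adjoint (rank1 N a) = rank1 N a" by (rule eq_matI) (auto simp: rank1_def)
  have q: "0 \<le> Re (conjugate v \<bullet> (rank1 N a *\<^sub>v v))" if v: "v \<in> carrier_vec N" for v
  proof -
    define z where "z = (\<Sum>j<N. cnj (a j) * v $ j)"
    have "conjugate v \<bullet> (rank1 N a *\<^sub>v v) = (\<Sum>i<N. cnj (v $ i) * (\<Sum>j<N. rank1 N a $$ (i,j) * v $ j))"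
      by (rule qf_sum[OF c v])
    also have "\<dots> = (\<Sum>i<N. cnj (v $ i) * a i * z)"
      unfolding z_def by (intro sum.cong refl) (auto simp: rank1_def sum_distrib_left mult_ac intro!: sum.cong)
    also have "\<dots> = cnj z * z" unfolding z_def by (simp add: sum_distrib_right cnj_sum mult_ac)
    finally show ?thesis by (simp add: complex_mult_cnj)
  qed
  show ?thesis unfolding psd_def using c h q by blast
qed

definition omega :: "nat \<Rightarrow> complex mat" where
  "omega d = rank1 (d*d) (\<lambda>r. if r div d = r mod d then 1 else 0)"

lemma choi_tensor: "choi d dB S = tensor_id d dB d S (omega d)"
proof (rule eq_matI)
  fix r s assume rs: "r < dim_row (tensor_id d dB d S (omega d))" "s < dim_col (tensor_id d dB d S (omega d))"
  hence rs': "r < dB * d" "s < dB * d" by (auto simp: tensor_id_def)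
  have d: "d > 0" using rs' by (metis mult_0_right not_less_zero gr0I)
  have "mat d d (\<lambda>(a, b). if a = r mod d \<and> b = s mod d then 1 else 0) =
        mat d d (\<lambda>(a, b). omega d $$ (a * d + r mod d, b * d + s mod d))"
  proof (rule eq_matI)
    fix a b assume ab: "a < dim_row (mat d d (\<lambda>(a, b). omega d $$ (a * d + r mod d, b * d + s mod d)))"
      "b < dim_col (mat d d (\<lambda>(a, b). omega d $$ (a * d + r mod d, b * d + s mod d)))"
    hence ab': "a < d" "b < d" by auto
    have lt: "a * d + r mod d < d * d" "b * d + s mod d < d * d"
      using ab' d by (simp_all add: idx_lt)
    show "mat d d (\<lambda>(a, b). if a = r mod d \<and> b = s mod d then 1 else 0) $$ (a, b) =
        mat d d (\<lambda>(a, b). omega d $$ (a * d + r mod d, b * d + s mod d)) $$ (a, b)"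
      using ab' lt d by (simp add: omega_def rank1_def)
  qed auto
  thus "choi d dB S $$ (r, s) = tensor_id d dB d S (omega d) $$ (r, s)"
    using rs' by (simp add: choi_def tensor_id_def)
qed (auto simp: choi_def tensor_id_def)

lemma choi_psd: assumes "quantum_channel d dB S" shows "psd (dB * d) (choi d dB S)"
proof -
  have "psd (d * d) (omega d)" unfolding omega_def by (rule psd_rank1)
  thus ?thesis using assms unfolding quantum_channel_def choi_tensor by blast
qed

lemma tensor_trace: assumes S: "quantum_channel d dB S" and X: "X \<in> carrier_mat (d*k) (d*k)"
  shows "mtrace (tensor_id d dB k S X) = mtrace X"
proof -
  have Sc: "\<And>Y. Y \<in> carrier_mat d d \<Longrightarrow> S Y \<in> carrier_mat dB dB"
    and St: "\<And>Y. Y \<in> carrier_mat d d \<Longrightarrow> mtrace (S Y) = mtrace Y"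
    using S unfolding quantum_channel_def lin_map_def by auto
  define B where "B c = mat d d (\<lambda>(a,b). X $$ (a*k + c, b*k + c))" for c
  have Bc: "B c \<in> carrier_mat d d" for c unfolding B_def by simp
  have "mtrace (tensor_id d dB k S X) = (\<Sum>r<dB*k. S (B (r mod k)) $$ (r div k, r div k))"
    unfolding mtrace_def tensor_id_def B_def by simp
  also have "\<dots> = (\<Sum>b<dB. \<Sum>c<k. S (B c) $$ (b, b))"
    by (subst sum_split) (intro sum.cong refl, simp)
  also have "\<dots> = (\<Sum>c<k. \<Sum>b<dB. S (B c) $$ (b, b))" by (rule sum.swap)
  also have "\<dots> = (\<Sum>c<k. mtrace (B c))"
  proof (rule sum.cong[OF refl])
    fix c
    have "dim_row (S (B c)) = dB" using Sc[OF Bc, of c] by auto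
    thus "(\<Sum>b<dB. S (B c) $$ (b, b)) = mtrace (B c)" using St[OF Bc, of c] unfolding mtrace_def by simp
  qed
  also have "\<dots> = (\<Sum>c<k. \<Sum>a<d. X $$ (a*k + c, a*k + c))"
    unfolding mtrace_def B_def by simp
  also have "\<dots> = (\<Sum>a<d. \<Sum>c<k. X $$ (a*k + c, a*k + c))" by (rule sum.swap)
  also have "\<dots> = (\<Sum>r<d*k. X $$ (r, r))" by (rule sum_split[symmetric])
  also have "\<dots> = mtrace X" unfolding mtrace_def using X by simp
  finally show ?thesis .
qed

definition GK :: "nat \<Rightarrow> complex mat \<Rightarrow> nat set \<Rightarrow> complex mat" where
  "GK n V K = mat n n (\<lambda>(i,j). \<Sum>k\<in>K. V $$ (i,k) * cnj (V $$ (j,k)))"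

lemma rank_GK: assumes "finite K"
  shows "vec_space.rank n (GK n V K) \<le> card K"
  using assms
proof (induction K rule: finite_induct)
  case empty
  have "GK n V {} = 0\<^sub>m n n" unfolding GK_def by (rule eq_matI) auto
  thus ?case by (simp add: vec_space.rank_0I)
next
  case (insert k K)
  define R where "R = mat n n (\<lambda>(i,j). V $$ (i,k) * cnj (V $$ (j,k)))"
  have eq: "GK n V (insert k K) = GK n V K + R"
    unfolding GK_def R_def by (rule eq_matI) (use insert in auto)
  have Rc: "R \<in> carrier_mat n n" unfolding R_def by simp
  have Gc: "GK n V K \<in> carrier_mat n n" unfolding GK_def by simp
  have r1: "vec_space.rank n R \<le> 1"
    by (rule vec_space.rank_le_1_product_entries[OF Rc, of "\<lambda>i. V $$ (i,k)" "\<lambda>j. cnj (V $$ (j,k))"])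
      (auto simp: R_def)
  have "vec_space.rank n (GK n V (insert k K)) \<le> vec_space.rank n (GK n V K) + vec_space.rank n R"
    unfolding eq by (rule vec_space.rank_subadditive[OF Gc Rc])
  thus ?case using r1 insert by simp
qed

lemma rank_udu_ge: assumes V: "unitary_m n V" and M: "M = V * dmat n e * mat_adjoint V"
  shows "card {k. k < n \<and> e k \<noteq> 0} \<le> vec_space.rank n M"
proof -
  have Vc: "V \<in> carrier_mat n n" and VV: "V * mat_adjoint V = 1\<^sub>m n" using V unfolding unitary_m_def by auto
  define K0 where "K0 = {k \<in> {..<n}. e k = 0}"
  define e' where "e' k = (if e k = 0 then 1 else e k)" for k
  define G where "G = GK n V K0"
  have Gc: "G \<in> carrier_mat n n" unfolding G_def GK_def by simp
  have Mc: "M \<in> carrier_mat n n" unfolding M using Vc by simp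
  have MG: "M + G = V * dmat n e' * mat_adjoint V"
  proof (rule eq_matI)
    fix i j assume "i < dim_row (V * dmat n e' * mat_adjoint V)" "j < dim_col (V * dmat n e' * mat_adjoint V)"
    hence ij: "i < n" "j < n" using Vc by auto
    have "G $$ (i,j) = (\<Sum>k<n. if e k = 0 then V $$ (i,k) * cnj (V $$ (j,k)) else 0)"
      unfolding G_def GK_def K0_def using ij
      by (simp add: sum.inter_filter[of "{..<n}" "\<lambda>k. V $$ (i,k) * cnj (V $$ (j,k))" "\<lambda>k. e k = 0", symmetric])
    moreover have "M $$ (i,j) = (\<Sum>k<n. V $$ (i,k) * complex_of_real (e k) * cnj (V $$ (j,k)))"
      unfolding M by (rule udu_index[OF Vc ij])
    moreover have "(V * dmat n e' * mat_adjoint V) $$ (i,j) = (\<Sum>k<n. V $$ (i,k) * complex_of_real (e' k) * cnj (V $$ (j,k)))"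
      by (rule udu_index[OF Vc ij])
    moreover have "(M + G) $$ (i,j) = M $$ (i,j) + G $$ (i,j)" using ij Gc by simp
    moreover have "(\<Sum>k<n. V $$ (i,k) * complex_of_real (e k) * cnj (V $$ (j,k))) + (\<Sum>k<n. if e k = 0 then V $$ (i,k) * cnj (V $$ (j,k)) else 0)
       = (\<Sum>k<n. V $$ (i,k) * complex_of_real (e' k) * cnj (V $$ (j,k)))"
      unfolding sum.distrib[symmetric] by (intro sum.cong refl) (simp add: e'_def)
    ultimately show "(M + G) $$ (i,j) = (V * dmat n e' * mat_adjoint V) $$ (i,j)"
      by simp
  qed (use Gc Vc in auto)
  have "det (V * dmat n e' * mat_adjoint V) = det V * det (dmat n e') * det (mat_adjoint V)"
    using Vc by (simp add: det_mult[of _ n])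
  also have "\<dots> = det (dmat n e') * det (V * mat_adjoint V)"
    using Vc by (simp add: det_mult[of _ n])
  also have "\<dots> = det (dmat n e')" using VV by simp
  also have "\<dots> = (\<Prod>i = 0..<n. complex_of_real (e' i))"
    by (subst det_upper_triangular[of _ n]) (auto simp: upper_triangular_def prod_list_diag_prod)
  finally have "det (M + G) \<noteq> 0" unfolding MG by (simp add: e'_def)
  hence full: "vec_space.rank n (M + G) = n"
    using vec_space.det_rank_iff[of "M + G" n] Mc Gc by simp
  have "n \<le> vec_space.rank n M + vec_space.rank n G"
    using vec_space.rank_subadditive[OF Mc Gc] full by simp
  also have "vec_space.rank n G \<le> card K0" unfolding G_def by (rule rank_GK) (simp add: K0_def)
  finally have le: "n \<le> vec_space.rank n M + card K0" by simp
  have "card {k. k < n \<and> e k \<noteq> 0} + card K0 = n"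
  proof -
    have "{k. k < n \<and> e k \<noteq> 0} \<union> K0 = {..<n}" "{k. k < n \<and> e k \<noteq> 0} \<inter> K0 = {}" unfolding K0_def by auto
    thus ?thesis by (metis card_Un_disjoint card_lessThan finite_Un finite_lessThan)
  qed
  thus ?thesis using le by linarith
qed

lemma sum_block: fixes h :: "nat \<Rightarrow> 'a::comm_monoid_add" and d :: nat assumes "b < m"
  shows "(\<Sum>u<m*d. if u div d = b then h u else 0) = (\<Sum>j<d. h (b*d + j))"
proof -
  have "(\<Sum>u<m*d. if u div d = b then h u else 0) = (\<Sum>b'<m. \<Sum>j<d. if (b'*d+j) div d = b then h (b'*d+j) else 0)"
    by (rule sum_split[where f = "\<lambda>u. if u div d = b then h u else 0"])
  also have "\<dots> = (\<Sum>b'<m. if b' = b then (\<Sum>j<d. h (b*d+j)) else 0)"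
  proof (rule sum.cong[OF refl])
    fix b' show "(\<Sum>j<d. if (b'*d+j) div d = b then h (b'*d+j) else 0) = (if b' = b then (\<Sum>j<d. h (b*d+j)) else 0)"
      by (auto intro!: sum.cong sum.neutral)
  qed
  also have "\<dots> = (\<Sum>j<d. h (b*d+j))" using assms by simp
  finally show ?thesis .
qed

lemma ptrace_carrier[simp]: "ptrace_B d dB A \<in> carrier_mat d d" by (simp add: ptrace_B_def)

lemma ptrace_herm: assumes "A \<in> carrier_mat (dB*d) (dB*d)" "mat_adjoint A = A"
  shows "mat_adjoint (ptrace_B d dB A) = ptrace_B d dB A"
proof (rule eq_matI)
  fix i j assume ij: "i < dim_row (ptrace_B d dB A)" "j < dim_col (ptrace_B d dB A)"
  hence ij': "i < d" "j < d" by (auto simp: ptrace_B_def)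
  have h: "cnj (A $$ (b*d + j, b*d + i)) = A $$ (b*d + i, b*d + j)" if "b < dB" for b
  proof -
    have "mat_adjoint A $$ (b*d + i, b*d + j) = cnj (A $$ (b*d + j, b*d + i))"
      using assms idx_lt[OF that ij'(1)] idx_lt[OF that ij'(2)] by (intro adj_index) auto
    thus ?thesis using assms(2) by simp
  qed
  show "mat_adjoint (ptrace_B d dB A) $$ (i, j) = ptrace_B d dB A $$ (i, j)"
    using ij' h by (simp add: ptrace_B_def cnj_sum)
qed (auto simp: ptrace_B_def)

lemma kernel_key:
  assumes U: "unitary_m (dB*d) U" and J: "J = U * dmat (dB*d) dd * mat_adjoint U"
  and A: "A = U * dmat (dB*d) (\<lambda>k. \<bar>dd k\<bar>) * mat_adjoint U"
  and w: "w \<in> carrier_vec d" and Mw: "ptrace_B d dB A *\<^sub>v w = 0\<^sub>v d"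
  and b: "b < dB" and r: "r < dB*d"
  shows "(\<Sum>x<d. J $$ (r, b*d + x) * w $ x) = 0"
proof -
  let ?N = "dB*d"
  let ?M = "ptrace_B d dB A"
  have Uc: "U \<in> carrier_mat ?N ?N" using U unfolding unitary_m_def by auto
  have Ac: "A \<in> carrier_mat ?N ?N" using A Uc by simp
  have Jc: "J \<in> carrier_mat ?N ?N" using J Uc by simp
  have psdA: "psd ?N A" unfolding A by (rule psd_udu[OF U]) simp
  define z where "z bb = vec ?N (\<lambda>u. if u div d = bb then w $ (u mod d) else 0)" for bb
  have zc: "z bb \<in> carrier_vec ?N" for bb unfolding z_def by simp
  have lt: "bb < dB \<Longrightarrow> j < d \<Longrightarrow> bb*d + j < ?N" for bb j using idx_lt by blast
  have Az: "(\<Sum>v<?N. X $$ (u,v) * z bb $ v) = (\<Sum>j<d. X $$ (u, bb*d+j) * w $ j)" if "bb < dB" for X u bb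
  proof -
    have "(\<Sum>v<?N. X $$ (u,v) * z bb $ v) = (\<Sum>v<?N. if v div d = bb then X $$ (u,v) * w $ (v mod d) else 0)"
      unfolding z_def by (intro sum.cong refl) auto
    also have "\<dots> = (\<Sum>j<d. X $$ (u, bb*d+j) * w $ ((bb*d+j) mod d))" by (rule sum_block[OF that])
    also have "\<dots> = (\<Sum>j<d. X $$ (u, bb*d+j) * w $ j)" by (intro sum.cong refl) simp
    finally show ?thesis .
  qed
  have qz: "conjugate (z bb) \<bullet> (A *\<^sub>v z bb) = (\<Sum>i<d. cnj (w $ i) * (\<Sum>j<d. A $$ (bb*d+i, bb*d+j) * w $ j))"
    if bb: "bb < dB" for bb
  proof -
    have "conjugate (z bb) \<bullet> (A *\<^sub>v z bb) = (\<Sum>u<?N. cnj (z bb $ u) * (\<Sum>v<?N. A $$ (u,v) * z bb $ v))"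
      by (rule qf_sum[OF Ac zc])
    also have "\<dots> = (\<Sum>u<?N. if u div d = bb then cnj (w $ (u mod d)) * (\<Sum>j<d. A $$ (u, bb*d+j) * w $ j) else 0)"
      unfolding Az[OF bb] by (intro sum.cong refl) (auto simp: z_def)
    also have "\<dots> = (\<Sum>i<d. cnj (w $ ((bb*d+i) mod d)) * (\<Sum>j<d. A $$ (bb*d+i, bb*d+j) * w $ j))"
      by (rule sum_block[OF bb])
    also have "\<dots> = (\<Sum>i<d. cnj (w $ i) * (\<Sum>j<d. A $$ (bb*d+i, bb*d+j) * w $ j))" by simp
    finally show ?thesis .
  qed
  have "(\<Sum>bb<dB. conjugate (z bb) \<bullet> (A *\<^sub>v z bb)) = (\<Sum>bb<dB. \<Sum>i<d. \<Sum>j<d. cnj (w $ i) * A $$ (bb*d+i, bb*d+j) * w $ j)"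
    by (intro sum.cong refl) (simp add: qz sum_distrib_left mult.assoc)
  also have "\<dots> = (\<Sum>i<d. \<Sum>j<d. \<Sum>bb<dB. cnj (w $ i) * A $$ (bb*d+i, bb*d+j) * w $ j)"
    by (subst sum.swap) (rule sum.cong[OF refl], rule sum.swap)
  also have "\<dots> = (\<Sum>i<d. cnj (w $ i) * (\<Sum>j<d. ?M $$ (i,j) * w $ j))"
    by (intro sum.cong refl) (auto simp: ptrace_B_def sum_distrib_left sum_distrib_right mult_ac intro!: sum.cong)
  also have "\<dots> = conjugate w \<bullet> (?M *\<^sub>v w)" by (rule qf_sum[symmetric, OF ptrace_carrier w])
  also have "\<dots> = 0" using Mw w by simp
  finally have s0: "(\<Sum>bb<dB. conjugate (z bb) \<bullet> (A *\<^sub>v z bb)) = 0" .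
  have nn: "bb < dB \<Longrightarrow> Re (conjugate (z bb) \<bullet> (A *\<^sub>v z bb)) \<ge> 0" for bb
    using psdA zc unfolding psd_def by blast
  have "(\<Sum>bb<dB. Re (conjugate (z bb) \<bullet> (A *\<^sub>v z bb))) = 0" using arg_cong[OF s0, of Re] by (simp add: Re_sum)
  hence "\<forall>bb\<in>{..<dB}. Re (conjugate (z bb) \<bullet> (A *\<^sub>v z bb)) = 0"
    by (subst sum_nonneg_eq_0_iff[symmetric]) (use nn in auto)
  hence zb: "Re (conjugate (z b) \<bullet> (A *\<^sub>v z b)) = 0" using b by simp
  have Jz: "J *\<^sub>v z b = 0\<^sub>v ?N" unfolding J
    by (rule kernel_udu[OF Uc zc, of "\<lambda>k. \<bar>dd k\<bar>"]) (use zb A in auto)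
  have "(J *\<^sub>v z b) $ r = (\<Sum>v<?N. J $$ (r,v) * z b $ v)" by (rule mult_vec_sum[OF Jc zc r])
  also have "\<dots> = (\<Sum>x<d. J $$ (r, b*d + x) * w $ x)" by (rule Az[OF b])
  finally show ?thesis using Jz r by simp
qed

lemma tensor_choi: assumes L1: "lin_map d dB P1" and L2: "lin_map d dB P2"
  and r: "r < dB*d" and s: "s < dB*d"
  shows "tensor_id d dB d (\<lambda>X. P1 X - P2 X) \<rho> $$ (r,s) =
    (\<Sum>a<d. \<Sum>b<d. \<rho> $$ (a*d + r mod d, b*d + s mod d) * choi d dB (\<lambda>X. P1 X - P2 X) $$ ((r div d)*d + a, (s div d)*d + b))"
proof -
  define Bl where "Bl = mat d d (\<lambda>(a,b). \<rho> $$ (a*d + r mod d, b*d + s mod d))"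
  have Blc: "Bl \<in> carrier_mat d d" unfolding Bl_def by simp
  have c1: "\<And>Y. Y \<in> carrier_mat d d \<Longrightarrow> P1 Y \<in> carrier_mat dB dB" using L1 unfolding lin_map_def by auto
  have c2: "\<And>Y. Y \<in> carrier_mat d d \<Longrightarrow> P2 Y \<in> carrier_mat dB dB" using L2 unfolding lin_map_def by auto
  have i: "r div d < dB" and j: "s div d < dB" using r s div_lt by auto
  have "tensor_id d dB d (\<lambda>X. P1 X - P2 X) \<rho> $$ (r,s) = (P1 Bl - P2 Bl) $$ (r div d, s div d)"
    unfolding tensor_id_def Bl_def using r s by simp
  also have "\<dots> = P1 Bl $$ (r div d, s div d) - P2 Bl $$ (r div d, s div d)"
    using c2[OF Blc] i j by simp
  also have "\<dots> = (\<Sum>a<d. \<Sum>b<d. Bl $$ (a,b) * P1 (Emat d a b) $$ (r div d, s div d))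
       - (\<Sum>a<d. \<Sum>b<d. Bl $$ (a,b) * P2 (Emat d a b) $$ (r div d, s div d))"
    using lin_expand[OF L1 Blc i j] lin_expand[OF L2 Blc i j] by simp
  also have "\<dots> = (\<Sum>a<d. \<Sum>b<d. Bl $$ (a,b) * (P1 (Emat d a b) $$ (r div d, s div d) - P2 (Emat d a b) $$ (r div d, s div d)))"
    by (simp add: sum_subtractf[symmetric] right_diff_distrib)
  also have "\<dots> = (\<Sum>a<d. \<Sum>b<d. \<rho> $$ (a*d + r mod d, b*d + s mod d) * choi d dB (\<lambda>X. P1 X - P2 X) $$ ((r div d)*d + a, (s div d)*d + b))"
  proof (intro sum.cong refl)
    fix a b assume a: "a \<in> {..<d}" and b: "b \<in> {..<d}"
    have lt: "(r div d)*d + a < dB*d" "(s div d)*d + b < dB*d" using idx_lt i j a b by auto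
    have E: "mat d d (\<lambda>(x, y). if x = ((r div d)*d + a) mod d \<and> y = ((s div d)*d + b) mod d then 1 else 0) = Emat d a b"
      using a b by (simp add: Emat_def)
    have "choi d dB (\<lambda>X. P1 X - P2 X) $$ ((r div d)*d + a, (s div d)*d + b)
        = (P1 (Emat d a b) - P2 (Emat d a b)) $$ (r div d, s div d)"
      unfolding choi_def using lt a b E by simp
    also have "\<dots> = P1 (Emat d a b) $$ (r div d, s div d) - P2 (Emat d a b) $$ (r div d, s div d)"
      using c2[OF Emat_carrier, of a b] i j by simp
    finally show "Bl $$ (a,b) * (P1 (Emat d a b) $$ (r div d, s div d) - P2 (Emat d a b) $$ (r div d, s div d))
      = \<rho> $$ (a*d + r mod d, b*d + s mod d) * choi d dB (\<lambda>X. P1 X - P2 X) $$ ((r div d)*d + a, (s div d)*d + b)"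
      unfolding Bl_def using a b by simp
  qed
  finally show ?thesis .
qed

lemma unitary_one: "unitary_m n (1\<^sub>m n)" by (simp add: unitary_m_def)

lemma density_tensor_bound: assumes Q1: "quantum_channel d dB P1" and Q2: "quantum_channel d dB P2"
  and rho: "density (d*k) \<rho>"
  shows "trace_norm (tensor_id d dB k (\<lambda>X. P1 X - P2 X) \<rho>) \<le> 2"
    "trace_norm (tensor_id d dB k (\<lambda>X. P1 X - P2 X) \<rho>) \<ge> 0"
proof -
  have L1: "lin_map d dB P1" and L2: "lin_map d dB P2" using Q1 Q2 unfolding quantum_channel_def by auto
  have pr: "psd (d*k) \<rho>" and tr: "mtrace \<rho> = 1" using rho unfolding density_def by auto
  have rc: "\<rho> \<in> carrier_mat (d*k) (d*k)" using pr unfolding psd_def by auto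
  have y1: "psd (dB*k) (tensor_id d dB k P1 \<rho>)" using Q1 pr unfolding quantum_channel_def by blast
  have y2: "psd (dB*k) (tensor_id d dB k P2 \<rho>)" using Q2 pr unfolding quantum_channel_def by blast
  have t1: "mtrace (tensor_id d dB k P1 \<rho>) = 1" using tensor_trace[OF Q1 rc] tr by simp
  have t2: "mtrace (tensor_id d dB k P2 \<rho>) = 1" using tensor_trace[OF Q2 rc] tr by simp
  show "trace_norm (tensor_id d dB k (\<lambda>X. P1 X - P2 X) \<rho>) \<le> 2"
    unfolding tensor_diff[OF L1 L2] by (rule trace_norm_diff_le[OF y1 y2 t1 t2])
  have c1: "tensor_id d dB k P1 \<rho> \<in> carrier_mat (dB*k) (dB*k)" "mat_adjoint (tensor_id d dB k P1 \<rho>) = tensor_id d dB k P1 \<rho>"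
    using y1 unfolding psd_def by auto
  have c2: "tensor_id d dB k P2 \<rho> \<in> carrier_mat (dB*k) (dB*k)" "mat_adjoint (tensor_id d dB k P2 \<rho>) = tensor_id d dB k P2 \<rho>"
    using y2 unfolding psd_def by auto
  show "trace_norm (tensor_id d dB k (\<lambda>X. P1 X - P2 X) \<rho>) \<ge> 0"
    unfolding tensor_diff[OF L1 L2]
    by (rule trace_norm_herm_nonneg[of _ "dB*k"]) (use c1 c2 adj_minus[OF c1(1) c2(1)] in \<open>auto simp: minus_carrier_mat\<close>)
qed

theorem corollary1:
  fixes d dB :: nat and \<Phi>1 \<Phi>2 :: "complex mat \<Rightarrow> complex mat"
  assumes "d > 0"
    and "quantum_channel d dB \<Phi>1"
    and "quantum_channel d dB \<Phi>2"
  shows "me_norm d dB (\<lambda>X. \<Phi>1 X - \<Phi>2 X)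
           \<le> real (mat_rank (M_op d dB (\<lambda>X. \<Phi>1 X - \<Phi>2 X))) / real d
              * diamond_norm d dB (\<lambda>X. \<Phi>1 X - \<Phi>2 X)"
proof -
  note d = assms(1) and Q1 = assms(2) and Q2 = assms(3)
  let ?D = "\<lambda>X. \<Phi>1 X - \<Phi>2 X"
  let ?N = "dB*d"
  have L1: "lin_map d dB \<Phi>1" and L2: "lin_map d dB \<Phi>2" using Q1 Q2 unfolding quantum_channel_def by auto
  define J where "J = choi d dB ?D"
  have Jeq: "J = choi d dB \<Phi>1 - choi d dB \<Phi>2" unfolding J_def by (rule choi_diff[OF L1 L2])
  have p1: "psd ?N (choi d dB \<Phi>1)" and p2: "psd ?N (choi d dB \<Phi>2)" using choi_psd Q1 Q2 by auto
  have c1: "choi d dB \<Phi>1 \<in> carrier_mat ?N ?N" "mat_adjoint (choi d dB \<Phi>1) = choi d dB \<Phi>1" using p1 unfolding psd_def by auto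
  have c2: "choi d dB \<Phi>2 \<in> carrier_mat ?N ?N" "mat_adjoint (choi d dB \<Phi>2) = choi d dB \<Phi>2" using p2 unfolding psd_def by auto
  have Jc: "J \<in> carrier_mat ?N ?N" unfolding Jeq using c2 by (simp add: minus_carrier_mat)
  have hJ: "mat_adjoint J = J" unfolding Jeq using adj_minus[OF c1(1) c2(1)] c1 c2 by simp
  obtain U dd where U: "unitary_m ?N U" and JU: "J = U * dmat ?N dd * mat_adjoint U"
    using spectral[OF Jc hJ] by blast
  have Uc: "U \<in> carrier_mat ?N ?N" using U unfolding unitary_m_def by auto
  define A where "A = U * dmat ?N (\<lambda>k. \<bar>dd k\<bar>) * mat_adjoint U"
  have absJ: "mat_abs J = A" unfolding A_def by (rule mat_abs_udu[OF U JU])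
  define M where "M = ptrace_B d dB A"
  have Mop: "M_op d dB ?D = M" unfolding M_op_def M_def absJ[unfolded J_def] ..
  have Ac: "A \<in> carrier_mat ?N ?N" unfolding A_def using Uc by simp
  have hA: "mat_adjoint A = A" unfolding A_def by (rule adj_udu[OF Uc])
  have Mc: "M \<in> carrier_mat d d" unfolding M_def by simp
  have hM: "mat_adjoint M = M" unfolding M_def by (rule ptrace_herm[OF Ac hA])
  obtain V e where V: "unitary_m d V" and MV: "M = V * dmat d e * mat_adjoint V"
    using spectral[OF Mc hM] by blast
  have Vc: "V \<in> carrier_mat d d" using V unfolding unitary_m_def by auto
  define F where "F k = (if e k = 0 then 0 else (1::real))" for k
  define P where "P = V * dmat d F * mat_adjoint V"
  have Pc: "P \<in> carrier_mat d d" unfolding P_def using Vc by simp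
  have hP: "mat_adjoint P = P" unfolding P_def by (rule adj_udu[OF Vc])
  have MP: "M * P = M" unfolding MV P_def udu_mult[OF V]
    by (rule arg_cong[where f = "\<lambda>f. V * dmat d f * mat_adjoint V"]) (auto simp: F_def)
  have PP: "P * P = P" unfolding P_def udu_mult[OF V]
    by (rule arg_cong[where f = "\<lambda>f. V * dmat d f * mat_adjoint V"]) (auto simp: F_def)
  define t where "t = card {k. k < d \<and> e k \<noteq> 0}"
  have sumF: "(\<Sum>k<d. F k) = real t"
  proof -
    have "(\<Sum>k<d. F k) = (\<Sum>k<d. if e k \<noteq> 0 then 1 else 0)" unfolding F_def by (intro sum.cong) auto
    also have "\<dots> = (\<Sum>k\<in>{k \<in> {..<d}. e k \<noteq> 0}. 1)" by (rule sum.inter_filter[symmetric]) simp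
    also have "\<dots> = real t"
    proof -
      have "{k \<in> {..<d}. e k \<noteq> 0} = {k. k < d \<and> e k \<noteq> 0}" by auto
      thus ?thesis unfolding t_def by simp
    qed
    finally show ?thesis .
  qed
  have trP: "mtrace P = complex_of_real (real t)" unfolding P_def mtrace_udu[OF V] sumF ..
  have rank_t: "t \<le> mat_rank M"
    unfolding mat_rank_def t_def using rank_udu_ge[OF V MV] Mc by simp
  have KEY: "(\<Sum>x<d. J $$ (r, b*d + x) * P $$ (x,c)) = J $$ (r, b*d + c)"
    if b: "b < dB" and r: "r < ?N" and c: "c < d" for b r c
  proof -
    define w where "w = vec d (\<lambda>x. (if x = c then 1 else 0) - P $$ (x,c))"
    have wc: "w \<in> carrier_vec d" unfolding w_def by simp
    have Mw: "M *\<^sub>v w = 0\<^sub>v d"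
    proof (rule eq_vecI)
      fix i assume "i < dim_vec (0\<^sub>v d :: complex vec)"
      hence i: "i < d" by simp
      have "(M *\<^sub>v w) $ i = (\<Sum>x<d. M $$ (i,x) * w $ x)" by (rule mult_vec_sum[OF Mc wc i])
      also have "\<dots> = (\<Sum>x<d. M $$ (i,x) * (if x = c then 1 else 0)) - (\<Sum>x<d. M $$ (i,x) * P $$ (x,c))"
        unfolding w_def sum_subtractf[symmetric] by (intro sum.cong refl) (simp add: right_diff_distrib)
      also have "(\<Sum>x<d. M $$ (i,x) * (if x = c then 1 else 0)) = M $$ (i,c)"
        using c by (simp add: if_distrib cong: if_cong)
      also have "(\<Sum>x<d. M $$ (i,x) * P $$ (x,c)) = (M * P) $$ (i,c)"
        by (rule mult_index_sum[symmetric, OF Mc Pc i c])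
      finally show "(M *\<^sub>v w) $ i = 0\<^sub>v d $ i" using MP i by simp
    qed (use Mc in simp)
    have "(\<Sum>x<d. J $$ (r, b*d + x) * w $ x) = 0"
      by (rule kernel_key[OF U JU A_def wc _ b r]) (use Mw M_def in simp)
    moreover have "(\<Sum>x<d. J $$ (r, b*d + x) * w $ x) = J $$ (r, b*d + c) - (\<Sum>x<d. J $$ (r, b*d + x) * P $$ (x,c))"
    proof -
      have "(\<Sum>x<d. J $$ (r, b*d + x) * w $ x) = (\<Sum>x<d. J $$ (r, b*d + x) * (if x = c then 1 else 0)) - (\<Sum>x<d. J $$ (r, b*d + x) * P $$ (x,c))"
        unfolding w_def sum_subtractf[symmetric] by (intro sum.cong refl) (simp add: right_diff_distrib)
      also have "(\<Sum>x<d. J $$ (r, b*d + x) * (if x = c then 1 else 0)) = J $$ (r, b*d + c)"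
        using c by (simp add: if_distrib cong: if_cong)
      finally show ?thesis .
    qed
    ultimately show ?thesis by simp
  qed
  have Jh: "cnj (J $$ (u, v)) = J $$ (v, u)" if "u < ?N" "v < ?N" for u v
  proof -
    have "mat_adjoint J $$ (v, u) = cnj (J $$ (u, v))" using Jc that by (intro adj_index) auto
    thus ?thesis using hJ by simp
  qed
  have Ph: "cnj (P $$ (u, v)) = P $$ (v, u)" if "u < d" "v < d" for u v
  proof -
    have "mat_adjoint P $$ (v, u) = cnj (P $$ (u, v))" using Pc that by (intro adj_index) auto
    thus ?thesis using hP by simp
  qed
  have KEY': "(\<Sum>x<d. P $$ (c,x) * J $$ (b*d + x, s)) = J $$ (b*d + c, s)"
    if b: "b < dB" and s: "s < ?N" and c: "c < d" for b s c
  proof -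
    have "cnj (\<Sum>x<d. J $$ (s, b*d + x) * P $$ (x,c)) = cnj (J $$ (s, b*d + c))" using KEY[OF b s c] by simp
    moreover have "cnj (\<Sum>x<d. J $$ (s, b*d + x) * P $$ (x,c)) = (\<Sum>x<d. P $$ (c,x) * J $$ (b*d + x, s))"
      unfolding cnj_sum by (intro sum.cong refl) (use Jh Ph idx_lt[OF b] s c in auto)
    moreover have "cnj (J $$ (s, b*d + c)) = J $$ (b*d + c, s)" using Jh idx_lt[OF b c] s by auto
    ultimately show ?thesis by simp
  qed
  define S where "S = {trace_norm (tensor_id d dB k ?D \<rho>) | k \<rho>. density (d*k) \<rho>}"
  have dia: "diamond_norm d dB ?D = Sup S" unfolding diamond_norm_def S_def ..
  have bdd: "bdd_above S" unfolding S_def bdd_above_def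
    using density_tensor_bound(1)[OF Q1 Q2] by blast
  have Snn: "x \<in> S \<Longrightarrow> x \<ge> 0" for x unfolding S_def using density_tensor_bound(2)[OF Q1 Q2] by blast
  define tn where "tn = (\<Sum>k<?N. \<bar>dd k\<bar>)"
  have tn0: "tn \<ge> 0" unfolding tn_def by (simp add: sum_nonneg)
  have cd: "(1 / of_nat d :: complex) = complex_of_real (1 / real d)" by simp
  have me: "me_norm d dB ?D = tn / real d"
  proof -
    have "me_norm d dB ?D = trace_norm (complex_of_real (1 / real d) \<cdot>\<^sub>m J)" unfolding me_norm_def J_def cd ..
    also have "\<dots> = (\<Sum>k<?N. \<bar>1 / real d * dd k\<bar>)" unfolding JU smult_udu[OF Uc] trace_norm_udu[OF U] ..
    also have "\<dots> = tn / real d" unfolding tn_def by (simp add: abs_mult sum_divide_distrib)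
    finally show ?thesis .
  qed
  show ?thesis
  proof (cases "t = 0")
    case True
    hence e0: "k < d \<Longrightarrow> e k = 0" for k unfolding t_def by auto
    have P0: "P $$ (x,c) = 0" if "x < d" "c < d" for x c
      unfolding P_def udu_index[OF Vc that] using e0 by (simp add: F_def)
    have J0: "J = 0\<^sub>m ?N ?N"
    proof (rule eq_matI)
      fix u v assume "u < dim_row (0\<^sub>m ?N ?N :: complex mat)" "v < dim_col (0\<^sub>m ?N ?N :: complex mat)"
      hence uv: "u < ?N" "v < ?N" by auto
      have b: "v div d < dB" and c: "v mod d < d" using uv div_lt mod_lt by auto
      have "J $$ (u, (v div d)*d + v mod d) = (\<Sum>x<d. J $$ (u, (v div d)*d + x) * P $$ (x, v mod d))"
        using KEY[OF b uv(1) c] by simp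
      also have "\<dots> = 0" using P0 c by simp
      finally show "J $$ (u,v) = 0\<^sub>m ?N ?N $$ (u,v)" using uv by simp
    qed (use Jc in auto)
    have "tn = 0"
    proof -
      have "J = 1\<^sub>m ?N * dmat ?N (\<lambda>_. 0) * mat_adjoint (1\<^sub>m ?N)" unfolding J0 by (rule eq_matI) auto
      hence "U * dmat ?N dd * mat_adjoint U = 1\<^sub>m ?N * dmat ?N (\<lambda>_. 0) * mat_adjoint (1\<^sub>m ?N)" using JU by simp
      hence "trace_norm (U * dmat ?N dd * mat_adjoint U) = trace_norm (1\<^sub>m ?N * dmat ?N (\<lambda>_. 0) * mat_adjoint (1\<^sub>m ?N))" by simp
      thus ?thesis unfolding trace_norm_udu[OF U] trace_norm_udu[OF unitary_one] tn_def by simp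
    qed
    hence lhs: "me_norm d dB ?D = 0" using me by simp
    define \<rho>0 where "\<rho>0 = rank1 (d*1) (\<lambda>q. if q = 0 then 1 else 0)"
    have "psd (d*1) \<rho>0" unfolding \<rho>0_def by (rule psd_rank1)
    moreover have "mtrace \<rho>0 = 1"
    proof -
      have "mtrace \<rho>0 = (\<Sum>i<d. if i = 0 then 1 else 0)" unfolding \<rho>0_def mtrace_def rank1_def
        by (intro sum.cong) auto
      also have "\<dots> = 1" using d by simp
      finally show ?thesis .
    qed
    ultimately have "density (d*1) \<rho>0" unfolding density_def by blast
    hence "trace_norm (tensor_id d dB 1 ?D \<rho>0) \<in> S" unfolding S_def by blast
    hence "Sup S \<ge> 0" using cSup_upper[OF _ bdd] Snn by fastforce
    thus ?thesis unfolding lhs dia by simp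
  next
    case False
    hence tpos: "t > 0" by simp
    define c where "c = complex_of_real (1 / sqrt (real t))"
    have cc: "c * cnj c = complex_of_real (1 / real t)"
    proof -
      have sq: "sqrt (real t) * sqrt (real t) = real t" by simp
      have "c * cnj c = complex_of_real ((1 / sqrt (real t)) * (1 / sqrt (real t)))"
        unfolding c_def by (simp only: complex_cnj_complex_of_real of_real_mult)
      also have "(1 / sqrt (real t)) * (1 / sqrt (real t)) = 1 / real t"
        unfolding times_divide_times_eq sq by simp
      finally show ?thesis .
    qed
    define \<alpha> where "\<alpha> q = P $$ (q mod d, q div d) * c" for q
    define \<rho> where "\<rho> = rank1 (d*d) \<alpha>"
    have dens: "density (d*d) \<rho>"
    proof -
      have "mtrace \<rho> = (\<Sum>q<d*d. \<alpha> q * cnj (\<alpha> q))" unfolding \<rho>_def mtrace_def rank1_def by simp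
      also have "\<dots> = (\<Sum>a<d. \<Sum>x<d. \<alpha> (a*d+x) * cnj (\<alpha> (a*d+x)))" by (rule sum_split)
      also have "\<dots> = (\<Sum>a<d. \<Sum>x<d. (c * cnj c) * (P $$ (a,x) * P $$ (x,a)))"
        unfolding \<alpha>_def by (intro sum.cong refl) (auto simp: Ph mult_ac)
      also have "\<dots> = (c * cnj c) * (\<Sum>a<d. (P * P) $$ (a,a))"
        by (simp add: sum_distrib_left mult_index_sum[OF Pc Pc])
      also have "(\<Sum>a<d. (P * P) $$ (a,a)) = mtrace P" unfolding PP mtrace_def using Pc by simp
      also have "c * cnj c * mtrace P = 1" unfolding cc trP using tpos by simp
      finally show ?thesis unfolding density_def \<rho>_def using psd_rank1 by (simp add: \<rho>_def)
    qed
    have Y: "tensor_id d dB d ?D \<rho> = complex_of_real (1 / real t) \<cdot>\<^sub>m J"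
    proof (rule eq_matI)
      fix r s assume "r < dim_row (complex_of_real (1 / real t) \<cdot>\<^sub>m J)" "s < dim_col (complex_of_real (1 / real t) \<cdot>\<^sub>m J)"
      hence r: "r < ?N" and s: "s < ?N" using Jc by auto
      have rd: "r div d < dB" and sd: "s div d < dB" and rm: "r mod d < d" and sm: "s mod d < d"
        using r s div_lt mod_lt by auto
      have lt: "a < d \<Longrightarrow> x < d \<Longrightarrow> a*d + x < d*d" for a x using idx_lt by blast
      have "tensor_id d dB d ?D \<rho> $$ (r,s) =
        (\<Sum>a<d. \<Sum>b<d. \<rho> $$ (a*d + r mod d, b*d + s mod d) * J $$ ((r div d)*d + a, (s div d)*d + b))"
        unfolding J_def by (rule tensor_choi[OF L1 L2 r s])
      also have "\<dots> = (\<Sum>a<d. \<Sum>b<d. (c * cnj c) * (P $$ (r mod d, a) * (J $$ ((r div d)*d + a, (s div d)*d + b) * P $$ (b, s mod d))))"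
        unfolding \<rho>_def \<alpha>_def by (intro sum.cong refl) (auto simp: rank1_def lt rm sm Ph mult_ac)
      also have "\<dots> = (c * cnj c) * (\<Sum>a<d. P $$ (r mod d, a) * (\<Sum>b<d. J $$ ((r div d)*d + a, (s div d)*d + b) * P $$ (b, s mod d)))"
        by (simp add: sum_distrib_left)
      also have "\<dots> = (c * cnj c) * (\<Sum>a<d. P $$ (r mod d, a) * J $$ ((r div d)*d + a, (s div d)*d + s mod d))"
        using KEY[OF sd _ sm] idx_lt[OF rd] by simp
      also have "\<dots> = (c * cnj c) * J $$ ((r div d)*d + r mod d, (s div d)*d + s mod d)"
        using KEY'[OF rd _ rm] idx_lt[OF sd sm] by simp
      also have "\<dots> = (complex_of_real (1 / real t) \<cdot>\<^sub>m J) $$ (r,s)" using r s Jc cc by simp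
      finally show "tensor_id d dB d ?D \<rho> $$ (r,s) = (complex_of_real (1 / real t) \<cdot>\<^sub>m J) $$ (r,s)" .
    qed (use Jc in \<open>auto simp: tensor_id_def\<close>)
    have "trace_norm (tensor_id d dB d ?D \<rho>) = tn / real t"
      unfolding Y JU smult_udu[OF Uc] trace_norm_udu[OF U] tn_def by (simp add: abs_mult sum_divide_distrib)
    moreover have "trace_norm (tensor_id d dB d ?D \<rho>) \<in> S" unfolding S_def using dens by blast
    ultimately have tS: "tn / real t \<le> Sup S" using cSup_upper[OF _ bdd] by metis
    have "me_norm d dB ?D = (real t / real d) * (tn / real t)" unfolding me using tpos by simp
    also have "\<dots> \<le> (real (mat_rank M) / real d) * (tn / real t)"
      by (intro mult_right_mono divide_right_mono) (use rank_t tn0 in auto)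
    also have "\<dots> \<le> (real (mat_rank M) / real d) * Sup S"
      by (intro mult_left_mono tS) auto
    finally show ?thesis unfolding Mop dia .
  qed
qed

end
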